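(* The sequence $(I_m)_{m\ge0}$ is a Markov chain on $\mathcal R$ with transition matrix $\Pi=(I-D_pK)^{-1}D_{1-p}K$, and it has a unique stationary distribution $\pi$ given by $$\pi=\frac{\mu(I-D_pK)}{1-\bar p}=(1+\lambda)\mu(I-D_pK),$$ where $\lambda=\bar p/(1-\bar p)$. Moreover, the column vector $\mathbf g$ with $g(i)=E_i[G_1]$ satisfies $\mathbf g=(I-D_pK)^{-1}\mathbf p$ and $\pi\cdot\mathbf g=\lambda$.
   Context: Let $\mathcal R=\{1,\dots,N\}$ and let $K$ be a stochastic matrix on $\mathcal R$ whose Markov chain has a unique closed irreducible subset; let $\mu$ (row vector) be its unique stationary distribution. Fix $p:\mathcal R\to(0,1)$, $\mathbf p=(p(1),\dots,p(N))^t$, $I$ the identity, $D_p$ the diagonal matrix with entries $p(i)$, $D_{1-p}=I-D_p$, $\bar p=\mu\cdot\mathbf p$. Under $P_\eta$ (resp. $P_i$ when $\eta=\delta_i$), $(R_j)_{j\ge1}$ is a Markov chain with transition matrix $K$ and $R_1\sim\eta$, and given $(R_j)$ the $\xi(j)$ are independent Bernoulli$(p(R_j))$. Let $S_m=\inf\{k\ge0:\sum_{j=1}^{k+m}(1-\xi(j))=m\}$ (successes before the $m$-th failure), $G_m=S_m-S_{m-1}$, and $I_0=R_1$, $I_m=R_{S_m+m+1}$ for $m\ge1$ (the type of the cookie used right after the $m$-th failure). *)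

theory Defs
  imports "HOL-Analysis.Analysis" "HOL-Probability.Probability"
begin

text \<open>States are the elements of a finite type 'n (playing the role of R = {1..N}).
  Matrices are real^'n^'n, row vectors / column vectors are real^'n.\<close>

definition diag_mat :: "real^'n \<Rightarrow> real^'n^'n" where
  "diag_mat v = (\<chi> i j. if i = j then v $ i else 0)"

definition stochastic_matrix :: "real^'n^'n \<Rightarrow> bool" where
  "stochastic_matrix K \<longleftrightarrow> (\<forall>i j. 0 \<le> K $ i $ j) \<and> (\<forall>i. (\<Sum>j\<in>UNIV. K $ i $ j) = 1)"

definition prob_vector :: "real^'n \<Rightarrow> bool" where
  "prob_vector v \<longleftrightarrow> (\<forall>i. 0 \<le> v $ i) \<and> (\<Sum>i\<in>UNIV. v $ i) = 1"

definition stationary_dist :: "real^'n^'n \<Rightarrow> real^'n \<Rightarrow> bool" where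
  "stationary_dist A v \<longleftrightarrow> prob_vector v \<and> v v* A = v"

definition trans_rel :: "real^'n^'n \<Rightarrow> ('n \<times> 'n) set" where
  "trans_rel K = {(i, j). 0 < K $ i $ j}"

definition closed_set :: "real^'n^'n \<Rightarrow> 'n set \<Rightarrow> bool" where
  "closed_set K C \<longleftrightarrow> (\<forall>i\<in>C. \<forall>j. 0 < K $ i $ j \<longrightarrow> j \<in> C)"

definition irreducible_set :: "real^'n^'n \<Rightarrow> 'n set \<Rightarrow> bool" where
  "irreducible_set K C \<longleftrightarrow> C \<noteq> {} \<and> (\<forall>i\<in>C. \<forall>j\<in>C. (i, j) \<in> (trans_rel K)\<^sup>*)"

definition unique_closed_irreducible :: "real^'n^'n \<Rightarrow> bool" where
  "unique_closed_irreducible K \<longleftrightarrow> (\<exists>!C. closed_set K C \<and> irreducible_set K C)"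

text \<open>The cookie process under P_eta: R j and xi j for j \<ge> 1 (index 0 unused).
  (R_j) is a Markov chain with transition matrix K and R_1 ~ eta; given (R_j), the
  xi j are independent Bernoulli(p(R_j)).  This is expressed through the joint law of
  (R_1,xi_1,...,R_n,xi_n) for every n.\<close>
definition cookie_process ::
  "'w measure \<Rightarrow> (nat \<Rightarrow> 'w \<Rightarrow> 'n) \<Rightarrow> (nat \<Rightarrow> 'w \<Rightarrow> bool) \<Rightarrow> real^'n^'n \<Rightarrow> real^'n \<Rightarrow> real^'n \<Rightarrow> bool"
  where
  "cookie_process M R \<xi> K p \<eta> \<longleftrightarrow>
     prob_space M \<and>
     (\<forall>j. R j \<in> measurable M (count_space UNIV)) \<and>
     (\<forall>j. \<xi> j \<in> measurable M (count_space UNIV)) \<and>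
     (\<forall>n\<ge>1. \<forall>(r :: nat \<Rightarrow> 'n) (x :: nat \<Rightarrow> bool).
        measure M {\<omega>\<in>space M. \<forall>j\<in>{1..n}. R j \<omega> = r j \<and> \<xi> j \<omega> = x j}
        = \<eta> $ r 1 * (\<Prod>j\<in>{1..<n}. K $ r j $ r (Suc j))
            * (\<Prod>j\<in>{1..n}. if x j then p $ r j else 1 - p $ r j))"

text \<open>S_m = number of successes before the m-th failure (LEAST; a.s. well defined).\<close>
definition S_succ :: "(nat \<Rightarrow> 'w \<Rightarrow> bool) \<Rightarrow> nat \<Rightarrow> 'w \<Rightarrow> nat" where
  "S_succ \<xi> m \<omega> = (LEAST k. card {j\<in>{1..k+m}. \<not> \<xi> j \<omega>} = m)"

definition G_succ :: "(nat \<Rightarrow> 'w \<Rightarrow> bool) \<Rightarrow> nat \<Rightarrow> 'w \<Rightarrow> nat" where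
  "G_succ \<xi> m \<omega> = S_succ \<xi> m \<omega> - S_succ \<xi> (m - 1) \<omega>"

text \<open>I_0 = R_1, I_m = R_(S_m+m+1): type of the cookie used right after the m-th failure.\<close>
definition I_type :: "(nat \<Rightarrow> 'w \<Rightarrow> 'n) \<Rightarrow> (nat \<Rightarrow> 'w \<Rightarrow> bool) \<Rightarrow> nat \<Rightarrow> 'w \<Rightarrow> 'n" where
  "I_type R \<xi> m \<omega> = (if m = 0 then R 1 \<omega> else R (S_succ \<xi> m \<omega> + m + 1) \<omega>)"

end

theory Submission
  imports Defs
begin

lemma diag_mult_comp: "(diag_mat v ** M) $ i $ j = v $ i * M $ i $ j"
proof -
  have "(diag_mat v ** M) $ i $ j = (\<Sum>k\<in>UNIV. (if i = k then v $ i else 0) * M $ k $ j)"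
    unfolding diag_mat_def matrix_matrix_mult_def by simp
  also have "\<dots> = (\<Sum>k\<in>UNIV. if i = k then v $ i * M $ k $ j else 0)"
    by (rule sum.cong) auto
  finally show ?thesis by simp
qed

lemma vm_comp: "(x v* M) $ j = (\<Sum>i\<in>UNIV. x $ i * M $ i $ j)"
  by (simp add: vector_matrix_mult_def)

lemma mv_comp: "(M *v x) $ i = (\<Sum>j\<in>UNIV. M $ i $ j * x $ j)"
  by (simp add: matrix_vector_mult_def)

lemma mat1_comp: "(mat 1 :: real^'n^'n) $ i $ j = (if i = j then 1 else 0)"
  by (simp add: mat_def)

lemma matrix_inv_props:
  fixes B :: "real^'n^'n"
  assumes "invertible B"
  shows "B ** matrix_inv B = mat 1" "matrix_inv B ** B = mat 1"
proof -
  have "\<exists>A'. B ** A' = mat 1 \<and> A' ** B = mat 1" using assms by (simp add: invertible_def)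
  hence "B ** matrix_inv B = mat 1 \<and> matrix_inv B ** B = mat 1"
    unfolding matrix_inv_def by (rule someI_ex)
  thus "B ** matrix_inv B = mat 1" "matrix_inv B ** B = mat 1" by auto
qed

lemma exists_max_idx:
  fixes f :: "'n::finite \<Rightarrow> real"
  obtains i0 where "\<And>i. f i \<le> f i0"
proof -
  have "finite (range f)" by simp
  moreover have "range f \<noteq> {}" by simp
  ultimately have "Max (range f) \<in> range f" by (rule Max_in)
  then obtain i0 where "f i0 = Max (range f)" by (metis imageE)
  moreover have "\<And>i. f i \<le> Max (range f)" by simp
  ultimately show ?thesis using that by metis
qed

lemma invertible_B:
  fixes K :: "real^'n^'n" and p :: "real^'n"
  assumes K: "stochastic_matrix K" and p: "\<And>i. 0 \<le> p $ i \<and> p $ i < 1"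
  shows "invertible (mat 1 - diag_mat p ** K)"
proof -
  have "\<forall>x. (mat 1 - diag_mat p ** K) *v x = 0 \<longrightarrow> x = 0"
  proof (intro allI impI)
    fix x :: "real^'n"
    assume h: "(mat 1 - diag_mat p ** K) *v x = 0"
    have xi: "x $ i = p $ i * (\<Sum>j\<in>UNIV. K $ i $ j * x $ j)" for i
    proof -
      have "((mat 1 - diag_mat p ** K) *v x) $ i = 0" using h by simp
      hence "x $ i - (\<Sum>j\<in>UNIV. p $ i * K $ i $ j * x $ j) = 0"
        by (simp add: matrix_vector_mult_diff_rdistrib mv_comp diag_mult_comp)
      thus ?thesis by (simp add: sum_distrib_left mult.assoc)
    qed
    obtain i0 where i0: "\<And>i. \<bar>x $ i\<bar> \<le> \<bar>x $ i0\<bar>"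
      using exists_max_idx[of "\<lambda>i. \<bar>x $ i\<bar>"] by blast
    have "\<bar>\<Sum>j\<in>UNIV. K $ i0 $ j * x $ j\<bar> \<le> (\<Sum>j\<in>UNIV. K $ i0 $ j * \<bar>x $ i0\<bar>)"
    proof -
      have "\<bar>\<Sum>j\<in>UNIV. K $ i0 $ j * x $ j\<bar> \<le> (\<Sum>j\<in>UNIV. \<bar>K $ i0 $ j * x $ j\<bar>)"
        by (rule sum_abs)
      also have "\<dots> \<le> (\<Sum>j\<in>UNIV. K $ i0 $ j * \<bar>x $ i0\<bar>)"
        apply (rule sum_mono)
        using K i0 unfolding stochastic_matrix_def by (simp add: abs_mult mult_left_mono)
      finally show ?thesis .
    qed
    also have "\<dots> = \<bar>x $ i0\<bar>" using K unfolding stochastic_matrix_def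
      by (simp add: sum_distrib_right[symmetric])
    finally have b: "\<bar>\<Sum>j\<in>UNIV. K $ i0 $ j * x $ j\<bar> \<le> \<bar>x $ i0\<bar>" .
    have "\<bar>x $ i0\<bar> = p $ i0 * \<bar>\<Sum>j\<in>UNIV. K $ i0 $ j * x $ j\<bar>"
      using xi[of i0] p[of i0] by (simp add: abs_mult)
    also have "\<dots> \<le> p $ i0 * \<bar>x $ i0\<bar>" using b p[of i0] by (simp add: mult_left_mono)
    finally have "(1 - p $ i0) * \<bar>x $ i0\<bar> \<le> 0" by (simp add: algebra_simps)
    hence "\<bar>x $ i0\<bar> = 0" using p[of i0]
      by (smt (verit) mult_pos_pos)
    hence "\<And>i. x $ i = 0" using i0 by (metis abs_le_zero_iff)
    thus "x = 0" by (simp add: vec_eq_iff)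
  qed
  thus ?thesis using matrix_left_invertible_ker invertible_left_inverse by blast
qed

lemma closed_argmax:
  fixes K :: "real^'n^'n" and x :: "real^'n"
  assumes K: "stochastic_matrix K" and h: "K *v x = x"
  shows "closed_set K {i. \<forall>j. x $ j \<le> x $ i}"
  unfolding closed_set_def
proof (intro ballI allI impI)
  fix i l assume i: "i \<in> {i. \<forall>j. x $ j \<le> x $ i}" and Kl: "0 < K $ i $ l"
  have Kn: "\<And>a b. 0 \<le> K $ a $ b" and Ks: "(\<Sum>j\<in>UNIV. K $ i $ j) = 1"
    using K unfolding stochastic_matrix_def by auto
  have xi: "x $ i = (\<Sum>j\<in>UNIV. K $ i $ j * x $ j)"
    using arg_cong[OF h, of "\<lambda>v. v $ i"] by (simp add: mv_comp)
  have "(\<Sum>j\<in>UNIV. K $ i $ j * (x $ i - x $ j)) = x $ i * (\<Sum>j\<in>UNIV. K $ i $ j) - (\<Sum>j\<in>UNIV. K $ i $ j * x $ j)"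
    by (simp add: algebra_simps sum_subtractf sum_distrib_left)
  also have "\<dots> = 0" using Ks xi by simp
  finally have "(\<Sum>j\<in>UNIV. K $ i $ j * (x $ i - x $ j)) = 0" .
  moreover have "\<forall>j\<in>UNIV. 0 \<le> K $ i $ j * (x $ i - x $ j)"
    using i Kn by auto
  ultimately have "\<forall>j\<in>UNIV. K $ i $ j * (x $ i - x $ j) = 0"
    using sum_nonneg_eq_0_iff[of UNIV "\<lambda>j. K $ i $ j * (x $ i - x $ j)"] by simp
  hence "K $ i $ l * (x $ i - x $ l) = 0" by blast
  hence "x $ l = x $ i" using Kl by simp
  thus "l \<in> {i. \<forall>j. x $ j \<le> x $ i}" using i by simp
qed

lemma closed_contains_ci:
  fixes K :: "real^'n^'n"
  assumes "closed_set K S" "S \<noteq> {}"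
  shows "\<exists>C\<subseteq>S. closed_set K C \<and> irreducible_set K C"
proof -
  define P where "P C \<longleftrightarrow> C \<subseteq> S \<and> C \<noteq> {} \<and> closed_set K C" for C
  have "P S" using assms by (simp add: P_def)
  define C where "C = arg_min card P"
  have PC: "P C" and minC: "\<And>C'. P C' \<Longrightarrow> card C \<le> card C'"
    using arg_min_nat_lemma[of P S card, OF \<open>P S\<close>] unfolding C_def by auto
  have reach: "C = {j. (c, j) \<in> (trans_rel K)\<^sup>*}" if c: "c \<in> C" for c
  proof -
    define Rc where "Rc = {j. (c, j) \<in> (trans_rel K)\<^sup>*}"
    have sub: "Rc \<subseteq> C"
    proof
      fix j assume "j \<in> Rc"
      hence "(c, j) \<in> (trans_rel K)\<^sup>*" by (simp add: Rc_def)
      thus "j \<in> C"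
      proof (induction rule: rtrancl_induct)
        case base thus ?case using c .
      next
        case (step y z) thus ?case using PC unfolding P_def closed_set_def trans_rel_def by auto
      qed
    qed
    have "P Rc" unfolding P_def
    proof (intro conjI)
      show "Rc \<subseteq> S" using sub PC unfolding P_def by auto
      show "Rc \<noteq> {}" unfolding Rc_def by auto
      show "closed_set K Rc" unfolding closed_set_def Rc_def trans_rel_def
        by (auto intro: rtrancl_into_rtrancl)
    qed
    hence "card C \<le> card Rc" by (rule minC)
    hence "Rc = C" using sub by (intro card_seteq) auto
    thus ?thesis by (simp add: Rc_def)
  qed
  have "irreducible_set K C" unfolding irreducible_set_def
    using PC reach unfolding P_def by blast
  thus ?thesis using PC unfolding P_def by blast
qed

lemma harmonic_const:
  fixes K :: "real^'n^'n" and x :: "real^'n"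
  assumes K: "stochastic_matrix K" and U: "unique_closed_irreducible K" and h: "K *v x = x"
  shows "\<exists>c. \<forall>i. x $ i = c"
proof -
  obtain C0 where C0: "closed_set K C0" "irreducible_set K C0"
    and uq: "\<And>C. closed_set K C \<Longrightarrow> irreducible_set K C \<Longrightarrow> C = C0"
    using U unfolding unique_closed_irreducible_def by blast
  obtain i1 where i1: "\<And>i. x $ i \<le> x $ i1" using exists_max_idx[of "\<lambda>i. x $ i"] by blast
  obtain i2 where i2: "\<And>i. - x $ i \<le> - x $ i2" using exists_max_idx[of "\<lambda>i. - x $ i"] by blast
  have h2: "K *v (- x) = - x" using h by (simp add: matrix_vector_mult_diff_distrib[of K 0 x, simplified])
  have c1: "closed_set K {i. \<forall>j. x $ j \<le> x $ i}" by (rule closed_argmax[OF K h])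
  have c2: "closed_set K {i. \<forall>j. (- x) $ j \<le> (- x) $ i}" by (rule closed_argmax[OF K h2])
  obtain D1 where D1: "D1 \<subseteq> {i. \<forall>j. x $ j \<le> x $ i}" "closed_set K D1" "irreducible_set K D1"
    using closed_contains_ci[OF c1] i1 by blast
  obtain D2 where D2: "D2 \<subseteq> {i. \<forall>j. (- x) $ j \<le> (- x) $ i}" "closed_set K D2" "irreducible_set K D2"
    using closed_contains_ci[OF c2] i2 by fastforce
  have "D1 = C0" "D2 = C0" using uq D1(2,3) D2(2,3) by auto
  moreover obtain c where "c \<in> C0" using C0 unfolding irreducible_set_def by auto
  ultimately have "\<forall>j. x $ j \<le> x $ c" "\<forall>j. x $ c \<le> x $ j" using D1 D2 by auto
  hence "\<forall>i. x $ i = x $ c" by (meson antisym)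
  thus ?thesis by blast
qed

lemma left_fixed:
  fixes K :: "real^'n^'n" and \<mu> w :: "real^'n"
  assumes K: "stochastic_matrix K" and U: "unique_closed_irreducible K"
    and mu: "stationary_dist K \<mu>" and w: "w v* K = w"
  shows "w = (\<Sum>i\<in>UNIV. w $ i) *s \<mu>"
proof -
  have mK: "\<mu> v* K = \<mu>" and ms: "(\<Sum>i\<in>UNIV. \<mu> $ i) = 1"
    using mu unfolding stationary_dist_def prob_vector_def by auto
  define E :: "real^'n^'n" where "E = (\<chi> i j. \<mu> $ j)"
  define Z where "Z = mat 1 - K + E"
  have Ex: "E *v x = (\<chi> i. \<mu> \<bullet> x)" for x
    by (simp add: E_def vec_eq_iff mv_comp inner_vec_def)
  have vE: "v v* E = (\<Sum>i\<in>UNIV. v $ i) *s \<mu>" for v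
    by (simp add: E_def vec_eq_iff vm_comp sum_distrib_right)
  have muZ: "\<mu> v* Z = \<mu>"
    unfolding Z_def by (simp add: vector_matrix_mult_add_rdistrib vector_matrix_mult_diff_rdistrib mK vE ms)
  have "\<forall>x. Z *v x = 0 \<longrightarrow> x = 0"
  proof (intro allI impI)
    fix x assume z: "Z *v x = 0"
    have "\<mu> \<bullet> x = \<mu> \<bullet> (Z *v x)" using dot_lmul_matrix[of \<mu> Z x] muZ by simp
    hence mx: "\<mu> \<bullet> x = 0" using z by simp
    hence "E *v x = 0" by (simp add: Ex vec_eq_iff)
    hence "x - K *v x = 0" using z unfolding Z_def
      by (simp add: matrix_vector_mult_add_rdistrib matrix_vector_mult_diff_rdistrib)
    hence "K *v x = x" by simp
    then obtain c where c: "\<forall>i. x $ i = c" using harmonic_const[OF K U] by blast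
    have "\<mu> \<bullet> x = c" using ms c by (simp add: inner_vec_def sum_distrib_right[symmetric])
    thus "x = 0" using mx c by (simp add: vec_eq_iff)
  qed
  hence "invertible Z" using matrix_left_invertible_ker invertible_left_inverse by blast
  then obtain Z' where ZZ: "Z ** Z' = mat 1" using invertible_def by blast
  have wZ: "w v* Z = (\<Sum>i\<in>UNIV. w $ i) *s \<mu>"
    unfolding Z_def by (simp add: vector_matrix_mult_add_rdistrib vector_matrix_mult_diff_rdistrib w vE)
  have "w = w v* (Z ** Z')" using ZZ by simp
  also have "\<dots> = (w v* Z) v* Z'" by (simp add: vector_matrix_mul_assoc)
  also have "\<dots> = (\<Sum>i\<in>UNIV. w $ i) *s (\<mu> v* Z')" by (simp add: wZ scalar_vector_matrix_assoc)
  also have "\<mu> v* Z' = \<mu>"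
    by (metis muZ ZZ vector_matrix_mul_assoc vector_matrix_mul_rid)
  finally show ?thesis .
qed

lemma LA_main:
  fixes K :: "real^'n^'n" and p \<mu> :: "real^'n"
  assumes K: "stochastic_matrix K"
    and U: "unique_closed_irreducible K"
    and p: "\<And>i. 0 < p $ i \<and> p $ i < 1"
    and mu: "stationary_dist K \<mu>"
  defines "pbar \<equiv> \<mu> \<bullet> p"
  defines "lam \<equiv> pbar / (1 - pbar)"
  defines "Pmat \<equiv> matrix_inv (mat 1 - diag_mat p ** K) ** (diag_mat (1 - p) ** K)"
  defines "\<pi> \<equiv> (1 / (1 - pbar)) *s (\<mu> v* (mat 1 - diag_mat p ** K))"
  defines "g \<equiv> matrix_inv (mat 1 - diag_mat p ** K) *v p"
  shows "invertible (mat 1 - diag_mat p ** K)"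
    and "stationary_dist Pmat \<pi>"
    and "\<forall>\<nu>. stationary_dist Pmat \<nu> \<longrightarrow> \<nu> = \<pi>"
    and "\<pi> = (1 + lam) *s (\<mu> v* (mat 1 - diag_mat p ** K))"
    and "\<pi> \<bullet> g = lam"
    and "\<And>i. (\<Sum>j\<in>UNIV. Pmat $ i $ j) = 1"
proof -
  define A where "A = diag_mat p ** K"
  define B where "B = mat 1 - A"
  define Dm where "Dm = diag_mat (1 - p) ** K"
  define Bi where "Bi = matrix_inv B"
  have p': "\<And>i. 0 \<le> p $ i \<and> p $ i < 1" using p by (simp add: less_imp_le)
  show invB: "invertible (mat 1 - diag_mat p ** K)" by (rule invertible_B[OF K p'])
  have BBi: "B ** Bi = mat 1" and BiB: "Bi ** B = mat 1"
    using matrix_inv_props[OF invB] unfolding Bi_def B_def A_def by auto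
  have mK: "\<mu> v* K = \<mu>" and ms: "(\<Sum>i\<in>UNIV. \<mu> $ i) = 1" and mnn: "\<And>i. 0 \<le> \<mu> $ i"
    using mu unfolding stationary_dist_def prob_vector_def by auto
  have Kn: "\<And>a b. 0 \<le> K $ a $ b" and Ks: "\<And>a. (\<Sum>j\<in>UNIV. K $ a $ j) = 1"
    using K unfolding stochastic_matrix_def by auto
  have Dm_eq: "Dm = K - A"
    by (simp add: Dm_def A_def vec_eq_iff diag_mult_comp algebra_simps)
  have pbar_eq: "pbar = (\<Sum>i\<in>UNIV. \<mu> $ i * p $ i)" by (simp add: pbar_def inner_vec_def)
  have pbar_lt: "pbar < 1"
  proof -
    obtain i0 where i0: "0 < \<mu> $ i0"
    proof (rule ccontr)
      assume "\<not> thesis"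
      hence "\<forall>i. \<mu> $ i \<le> 0" using that by (meson not_le)
      hence "\<forall>i. \<mu> $ i = 0" using mnn by (meson antisym)
      thus False using ms by simp
    qed
    have "0 < (\<Sum>i\<in>UNIV. \<mu> $ i * (1 - p $ i))"
      by (rule sum_pos2[of UNIV i0]) (use i0 p mnn in \<open>auto intro!: mult_nonneg_nonneg mult_pos_pos simp: less_imp_le\<close>)
    also have "\<dots> = 1 - pbar" by (simp add: pbar_eq algebra_simps sum_subtractf ms)
    finally show ?thesis by simp
  qed
  define c where "c = 1 / (1 - pbar)"
  have c_pos: "0 < c" using pbar_lt by (simp add: c_def)
  have pi_eq: "\<pi> = c *s (\<mu> v* B)" by (simp add: \<pi>_def c_def B_def A_def)
  have muB_comp: "(\<mu> v* B) $ j = \<mu> $ j - (\<Sum>i\<in>UNIV. \<mu> $ i * p $ i * K $ i $ j)" for j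
    by (simp add: B_def A_def vector_matrix_mult_diff_rdistrib vm_comp diag_mult_comp mult.assoc)
  have muB_nn: "0 \<le> (\<mu> v* B) $ j" for j
  proof -
    have "\<mu> $ j = (\<Sum>i\<in>UNIV. \<mu> $ i * K $ i $ j)"
      using arg_cong[OF mK, of "\<lambda>v. v $ j"] by (simp add: vm_comp)
    moreover have "(\<Sum>i\<in>UNIV. \<mu> $ i * p $ i * K $ i $ j) \<le> (\<Sum>i\<in>UNIV. \<mu> $ i * K $ i $ j)"
    proof (rule sum_mono)
      fix i
      have "0 \<le> \<mu> $ i * K $ i $ j" using mnn Kn by simp
      hence "(\<mu> $ i * K $ i $ j) * p $ i \<le> \<mu> $ i * K $ i $ j" using p'[of i] by (simp add: mult_left_le)
      thus "\<mu> $ i * p $ i * K $ i $ j \<le> \<mu> $ i * K $ i $ j" by (simp add: algebra_simps)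
    qed
    ultimately show ?thesis by (simp add: muB_comp)
  qed
  have muB_sum: "(\<Sum>j\<in>UNIV. (\<mu> v* B) $ j) = 1 - pbar"
  proof -
    have "(\<Sum>j\<in>UNIV. \<Sum>i\<in>UNIV. \<mu> $ i * p $ i * K $ i $ j) = (\<Sum>i\<in>UNIV. \<Sum>j\<in>UNIV. \<mu> $ i * p $ i * K $ i $ j)"
      by (rule sum.swap)
    also have "\<dots> = (\<Sum>i\<in>UNIV. \<mu> $ i * p $ i * (\<Sum>j\<in>UNIV. K $ i $ j))"
      by (simp add: sum_distrib_left)
    also have "\<dots> = pbar" by (simp add: Ks pbar_eq)
    finally show ?thesis by (simp add: muB_comp sum_subtractf ms)
  qed
  have muBA: "\<mu> v* B = \<mu> - \<mu> v* A" by (simp add: B_def vector_matrix_mult_diff_rdistrib)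
  have Pm: "Pmat = Bi ** Dm" by (simp add: Pmat_def Bi_def B_def A_def Dm_def)
  have muB_P: "(\<mu> v* B) v* Pmat = \<mu> v* B"
  proof -
    have "(\<mu> v* B) v* Pmat = ((\<mu> v* B) v* Bi) v* Dm" by (simp add: Pm vector_matrix_mul_assoc matrix_mul_assoc)
    also have "\<dots> = \<mu> v* Dm" by (simp add: vector_matrix_mul_assoc BBi)
    also have "\<dots> = \<mu> v* B" by (simp add: Dm_eq vector_matrix_mult_diff_rdistrib mK muBA)
    finally show ?thesis .
  qed
  show "stationary_dist Pmat \<pi>"
    unfolding stationary_dist_def prob_vector_def
  proof (intro conjI allI)
    fix i show "0 \<le> \<pi> $ i" using c_pos muB_nn by (simp add: pi_eq)
  next
    show "(\<Sum>i\<in>UNIV. \<pi> $ i) = 1" using pbar_lt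
      by (simp add: pi_eq sum_divide_distrib[symmetric] muB_sum c_def)
  next
    show "\<pi> v* Pmat = \<pi>" by (simp add: pi_eq scalar_vector_matrix_assoc muB_P)
  qed
  show "\<forall>\<nu>. stationary_dist Pmat \<nu> \<longrightarrow> \<nu> = \<pi>"
  proof (intro allI impI)
    fix \<nu> assume nu: "stationary_dist Pmat \<nu>"
    have nP: "\<nu> v* Pmat = \<nu>" and ns: "(\<Sum>i\<in>UNIV. \<nu> $ i) = 1"
      using nu unfolding stationary_dist_def prob_vector_def by auto
    define w where "w = \<nu> v* Bi"
    have "w v* Dm = \<nu>" using nP by (simp add: w_def Pm vector_matrix_mul_assoc)
    moreover have "w v* B = \<nu>" by (simp add: w_def vector_matrix_mul_assoc BiB)
    ultimately have "w v* K - w v* A = w - w v* A"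
      by (simp add: Dm_eq B_def vector_matrix_mult_diff_rdistrib)
    hence "w v* K = w" by simp
    hence wm: "w = (\<Sum>i\<in>UNIV. w $ i) *s \<mu>" by (rule left_fixed[OF K U mu])
    define s where "s = (\<Sum>i\<in>UNIV. w $ i)"
    have nu_eq: "\<nu> = s *s (\<mu> v* B)"
      using \<open>w v* B = \<nu>\<close> wm by (metis s_def scalar_vector_matrix_assoc)
    have "1 = s * (1 - pbar)"
      using ns by (simp add: nu_eq sum_distrib_left[symmetric] muB_sum)
    hence "s = c" using pbar_lt by (simp add: c_def field_simps)
    thus "\<nu> = \<pi>" by (simp add: nu_eq pi_eq)
  qed
  show "\<pi> = (1 + lam) *s (\<mu> v* (mat 1 - diag_mat p ** K))"
  proof -
    have "1 + lam = c" using pbar_lt by (simp add: lam_def c_def field_simps)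
    thus ?thesis by (simp add: \<pi>_def c_def)
  qed
  show "\<pi> \<bullet> g = lam"
  proof -
    have "\<pi> \<bullet> g = (\<pi> v* Bi) \<bullet> p" by (simp add: g_def Bi_def B_def A_def dot_lmul_matrix)
    also have "\<pi> v* Bi = c *s \<mu>"
      by (simp add: pi_eq scalar_vector_matrix_assoc vector_matrix_mul_assoc BBi)
    also have "(c *s \<mu>) \<bullet> p = c * pbar" by (simp add: pbar_def inner_vec_def sum_distrib_left mult.assoc)
    also have "\<dots> = lam" by (simp add: c_def lam_def)
    finally show ?thesis .
  qed
  fix i
  define one :: "real^'n" where "one = (\<chi> i. 1)"
  have "Dm *v one = B *v one"
    by (simp add: Dm_def B_def A_def one_def vec_eq_iff mv_comp diag_mult_comp matrix_vector_mult_diff_rdistrib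
        sum_distrib_left[symmetric] Ks mult.assoc[symmetric])
  hence "Pmat *v one = one"
    by (metis Pm BiB matrix_vector_mul_assoc matrix_vector_mul_lid)
  thus "(\<Sum>j\<in>UNIV. Pmat $ i $ j) = 1"
  proof -
    have "(Pmat *v one) $ i = 1" using \<open>Pmat *v one = one\<close> by (simp add: one_def)
    thus ?thesis by (simp add: mv_comp one_def)
  qed
qed


definition bern :: "real^'n \<Rightarrow> 'n \<times> bool \<Rightarrow> real" where
  "bern p y = (if snd y then p $ fst y else 1 - p $ fst y)"

fun wtr :: "real^'n^'n \<Rightarrow> real^'n \<Rightarrow> real^'n \<Rightarrow> ('n \<times> bool) list \<Rightarrow> real" where
  "wtr K p \<eta> [] = 1"
| "wtr K p \<eta> (y # w) = (case w of [] \<Rightarrow> \<eta> $ fst y | z # _ \<Rightarrow> wtr K p \<eta> w * K $ fst z $ fst y) * bern p y"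

definition wt0 :: "real^'n^'n \<Rightarrow> real^'n \<Rightarrow> real^'n \<Rightarrow> 'n \<Rightarrow> ('n \<times> bool) list \<Rightarrow> real" where
  "wt0 K p \<eta> r w = (case w of [] \<Rightarrow> \<eta> $ r | z # _ \<Rightarrow> wtr K p \<eta> w * K $ fst z $ r)"

lemma wtr_cons: "wtr K p \<eta> (y # w) = wt0 K p \<eta> (fst y) w * bern p y"
  by (simp add: wt0_def)

lemma wt0_Nil: "wt0 K p \<eta> r [] = \<eta> $ r" by (simp add: wt0_def)
lemma wt0_Cons: "wt0 K p \<eta> r (z # w) = wt0 K p \<eta> (fst z) w * bern p z * K $ fst z $ r"
  by (simp add: wt0_def wtr_cons)

fun Wd :: "(nat \<Rightarrow> 'w \<Rightarrow> 'n) \<Rightarrow> (nat \<Rightarrow> 'w \<Rightarrow> bool) \<Rightarrow> nat \<Rightarrow> 'w \<Rightarrow> ('n \<times> bool) list" where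
  "Wd R \<xi> 0 \<omega> = []"
| "Wd R \<xi> (Suc n) \<omega> = (R (Suc n) \<omega>, \<xi> (Suc n) \<omega>) # Wd R \<xi> n \<omega>"

fun revl :: "nat \<Rightarrow> (nat \<Rightarrow> 'n) \<Rightarrow> (nat \<Rightarrow> bool) \<Rightarrow> ('n \<times> bool) list" where
  "revl 0 r x = []"
| "revl (Suc n) r x = (r (Suc n), x (Suc n)) # revl n r x"

definition words :: "nat \<Rightarrow> ('n::finite \<times> bool) list set" where
  "words n = {w. length w = n}"

lemma finite_words: "finite (words n)"
proof -
  show ?thesis unfolding words_def using finite_lists_length_eq[of "UNIV :: ('a \<times> bool) set" n] by simp
qed

lemma words_0: "words 0 = {[]}" by (auto simp: words_def)

lemma words_Suc_sum:
  fixes f :: "('n::finite \<times> bool) list \<Rightarrow> real"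
  shows "(\<Sum>w\<in>words (Suc n). f w) = (\<Sum>r\<in>UNIV. (\<Sum>w\<in>words n. f ((r, True) # w)) + (\<Sum>w\<in>words n. f ((r, False) # w)))"
proof -
  have im: "words (Suc n) = (\<lambda>(y, w). y # w) ` (UNIV \<times> words n)"
  proof
    show "words (Suc n) \<subseteq> (\<lambda>(y, w). y # w) ` (UNIV \<times> words n)"
    proof
      fix w assume "w \<in> words (Suc n)"
      then obtain y w' where "w = y # w'" "length w' = n" by (cases w) (auto simp: words_def)
      thus "w \<in> (\<lambda>(y, w). y # w) ` (UNIV \<times> words n)" by (auto simp: words_def image_iff)
    qed
  qed (auto simp: words_def)
  have inj: "inj_on (\<lambda>(y, w). y # w) (UNIV \<times> words n)" by (auto simp: inj_on_def)
  have "(\<Sum>w\<in>words (Suc n). f w) = sum f ((\<lambda>(y, w). y # w) ` (UNIV \<times> words n))"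
    by (simp only: im)
  also have "\<dots> = (\<Sum>x\<in>UNIV \<times> words n. f ((\<lambda>(y, w). y # w) x))"
    by (rule sum.reindex[OF inj, unfolded comp_def])
  also have "\<dots> = (\<Sum>(y, w)\<in>UNIV \<times> words n. f (y # w))"
    by (rule sum.cong) auto
  also have "\<dots> = (\<Sum>y\<in>UNIV. \<Sum>w\<in>words n. f (y # w))"
    by (rule sum.cartesian_product[symmetric])
  also have "\<dots> = (\<Sum>(r, b)\<in>UNIV \<times> UNIV. \<Sum>w\<in>words n. f ((r, b) # w))"
    by (simp add: UNIV_Times_UNIV case_prod_beta')
  also have "\<dots> = (\<Sum>r\<in>UNIV. \<Sum>b\<in>UNIV. \<Sum>w\<in>words n. f ((r, b) # w))"
    by (rule sum.cartesian_product[symmetric])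
  also have "\<dots> = (\<Sum>r\<in>UNIV. (\<Sum>w\<in>words n. f ((r, True) # w)) + (\<Sum>w\<in>words n. f ((r, False) # w)))"
    by (simp add: UNIV_bool add.commute)
  finally show ?thesis .
qed

lemma length_revl [simp]: "length (revl n r x) = n"
  by (induction n) auto

lemma revl_cong: "(\<forall>j\<in>{1..n}. r j = r' j \<and> x j = x' j) \<Longrightarrow> revl n r x = revl n r' x'"
  by (induction n) auto

lemma revl_eq_iff: "revl n r x = revl n r' x' \<longleftrightarrow> (\<forall>j\<in>{1..n}. r j = r' j \<and> x j = x' j)"
proof (induction n)
  case 0 thus ?case by simp
next
  case (Suc n)
  have "{1..Suc n} = insert (Suc n) {1..n}" by auto
  thus ?case using Suc by auto
qed

lemma revl_exists: "\<exists>r x. w = revl (length w) r x"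
proof (induction w)
  case Nil thus ?case by simp
next
  case (Cons y w)
  then obtain r x where w: "w = revl (length w) r x" by blast
  define n where "n = length w"
  have "revl n (r(Suc n := fst y)) (x(Suc n := snd y)) = revl n r x"
    by (rule revl_cong) auto
  hence "y # w = revl (length (y # w)) (r(Suc n := fst y)) (x(Suc n := snd y))"
    using w by (simp add: n_def[symmetric])
  thus ?case by blast
qed

lemma Wd_revl: "Wd R \<xi> n \<omega> = revl n (\<lambda>j. R j \<omega>) (\<lambda>j. \<xi> j \<omega>)"
  by (induction n) auto

lemma length_Wd [simp]: "length (Wd R \<xi> n \<omega>) = n"
  by (induction n) auto

lemma wtr_revl:
  assumes "1 \<le> n"
  shows "wtr K p \<eta> (revl n r x) = \<eta> $ (r 1) * (\<Prod>j\<in>{1..<n}. K $ r j $ r (Suc j))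
           * (\<Prod>j\<in>{1..n}. if x j then p $ r j else 1 - p $ r j)"
  using assms
proof (induction n rule: dec_induct)
  case base thus ?case by (simp add: bern_def)
next
  case (step n)
  obtain z w where rv: "revl n r x = z # w" and z: "z = (r n, x n)"
    using step(1) by (cases n) auto
  have "wtr K p \<eta> (revl (Suc n) r x) = wtr K p \<eta> (revl n r x) * K $ r n $ r (Suc n) * bern p (r (Suc n), x (Suc n))"
    by (simp add: rv z)
  also have "\<dots> = \<eta> $ (r 1) * ((\<Prod>j\<in>{1..<n}. K $ r j $ r (Suc j)) * K $ r n $ r (Suc n))
           * ((\<Prod>j\<in>{1..n}. if x j then p $ r j else 1 - p $ r j) * bern p (r (Suc n), x (Suc n)))"
    using step by (simp add: algebra_simps)
  also have "(\<Prod>j\<in>{1..<n}. K $ r j $ r (Suc j)) * K $ r n $ r (Suc n) = (\<Prod>j\<in>{1..<Suc n}. K $ r j $ r (Suc j))"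
    using step(1) by simp
  also have "(\<Prod>j\<in>{1..n}. if x j then p $ r j else 1 - p $ r j) * bern p (r (Suc n), x (Suc n))
      = (\<Prod>j\<in>{1..Suc n}. if x j then p $ r j else 1 - p $ r j)"
    by (simp add: bern_def prod.nat_ivl_Suc')
  finally show ?case .
qed


definition fc :: "('n \<times> bool) list \<Rightarrow> nat" where
  "fc w = length (filter (\<lambda>y. \<not> snd y) w)"

lemma fc_Nil [simp]: "fc [] = 0" by (simp add: fc_def)
lemma fc_Cons [simp]: "fc (y # w) = fc w + (if snd y then 0 else 1)" by (simp add: fc_def)

fun cnsA :: "(nat \<Rightarrow> 'n) \<Rightarrow> 'n \<Rightarrow> ('n \<times> bool) list \<Rightarrow> bool" where
  "cnsA i r [] = (r = i 0)"
| "cnsA i r (y # w) = (\<not> snd y \<longrightarrow> r = i (fc (y # w)))"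

fun ch :: "(nat \<Rightarrow> 'n) \<Rightarrow> ('n \<times> bool) list \<Rightarrow> bool" where
  "ch i [] = True"
| "ch i (y # w) = (ch i w \<and> cnsA i (fst y) w)"

locale cookie =
  fixes M :: "'w measure" and R :: "nat \<Rightarrow> 'w \<Rightarrow> 'n::finite" and \<xi> :: "nat \<Rightarrow> 'w \<Rightarrow> bool"
    and K :: "real^'n^'n" and p \<eta> :: "real^'n"
  assumes cp: "cookie_process M R \<xi> K p \<eta>" and Kst: "stochastic_matrix K"
    and pp: "\<And>i. 0 < p $ i \<and> p $ i < 1"
begin

lemma PS: "prob_space M" using cp by (simp add: cookie_process_def)

sublocale prob_space M by (rule PS)

lemma R_meas: "R j \<in> measurable M (count_space UNIV)" using cp by (simp add: cookie_process_def)
lemma xi_meas: "\<xi> j \<in> measurable M (count_space UNIV)" using cp by (simp add: cookie_process_def)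

lemma Kn: "0 \<le> K $ a $ b" and Ks: "(\<Sum>j\<in>UNIV. K $ a $ j) = 1"
  using Kst unfolding stochastic_matrix_def by auto

lemma Wd_meas: "Wd R \<xi> n \<in> measurable M (count_space UNIV)"
proof (induction n)
  case 0
  have "Wd R \<xi> 0 = (\<lambda>\<omega>. [])" by (simp add: fun_eq_iff)
  thus ?case by (simp only:) (rule measurable_const, simp)
next
  case (Suc n)
  have c: "(\<lambda>\<omega>. (R (Suc n) \<omega>, \<xi> (Suc n) \<omega>) # w) \<in> measurable M (count_space UNIV)" for w
  proof -
    have i: "(\<lambda>\<omega>. (r, \<xi> (Suc n) \<omega>) # w) \<in> measurable M (count_space UNIV)" for r
    proof -
      have "(\<lambda>\<omega>. (\<lambda>b \<omega>. (r, b) # w) (\<xi> (Suc n) \<omega>) \<omega>) \<in> measurable M (count_space UNIV)"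
        by (rule measurable_compose_countable[OF _ xi_meas]) (rule measurable_const, simp)
      thus ?thesis .
    qed
    have "(\<lambda>\<omega>. (\<lambda>r \<omega>. (r, \<xi> (Suc n) \<omega>) # w) (R (Suc n) \<omega>) \<omega>) \<in> measurable M (count_space UNIV)"
      by (rule measurable_compose_countable[OF i R_meas])
    thus ?thesis .
  qed
  have e: "Wd R \<xi> (Suc n) = (\<lambda>\<omega>. (\<lambda>w \<omega>. (R (Suc n) \<omega>, \<xi> (Suc n) \<omega>) # w) (Wd R \<xi> n \<omega>) \<omega>)"
    by (simp add: fun_eq_iff)
  have "(\<lambda>\<omega>. (\<lambda>w \<omega>. (R (Suc n) \<omega>, \<xi> (Suc n) \<omega>) # w) (Wd R \<xi> n \<omega>) \<omega>) \<in> measurable M (count_space UNIV)"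
    by (rule measurable_compose_countable[OF c Suc.IH])
  thus ?case by (subst e)
qed

lemma Wd_sets: "{\<omega>\<in>space M. P (Wd R \<xi> n \<omega>)} \<in> sets M"
proof -
  have "{\<omega>\<in>space M. P (Wd R \<xi> n \<omega>)} = Wd R \<xi> n -` {w. P w} \<inter> space M" by auto
  thus ?thesis using measurable_sets[OF Wd_meas, of "{w. P w}"] by simp
qed

lemma cyl:
  assumes "1 \<le> n"
  shows "measure M {\<omega>\<in>space M. \<forall>j\<in>{1..n}. R j \<omega> = r j \<and> \<xi> j \<omega> = x j}
        = \<eta> $ r 1 * (\<Prod>j\<in>{1..<n}. K $ r j $ r (Suc j))
            * (\<Prod>j\<in>{1..n}. if x j then p $ r j else 1 - p $ r j)"
  using cp assms unfolding cookie_process_def by blast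

lemma meas_Wd_eq: "measure M {\<omega>\<in>space M. Wd R \<xi> (length w) \<omega> = w} = wtr K p \<eta> w"
proof (cases "length w = 0")
  case True
  hence "w = []" by simp
  thus ?thesis using prob_space by simp
next
  case False
  define n where "n = length w"
  obtain r x where w: "w = revl n r x" using revl_exists[of w] unfolding n_def by blast
  have "{\<omega>\<in>space M. Wd R \<xi> n \<omega> = w} = {\<omega>\<in>space M. \<forall>j\<in>{1..n}. R j \<omega> = r j \<and> \<xi> j \<omega> = x j}"
    by (simp add: w Wd_revl revl_eq_iff)
  moreover have "1 \<le> n" using False unfolding n_def by linarith
  ultimately show ?thesis using cyl[of n r x] wtr_revl[of n K p \<eta> r x] by (simp add: n_def[symmetric] w)
qed

lemma meas_Wd_pred:
  "measure M {\<omega>\<in>space M. P (Wd R \<xi> n \<omega>)} = (\<Sum>w\<in>words n. if P w then wtr K p \<eta> w else 0)"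
proof -
  define S where "S = {w\<in>words n. P w}"
  have fS: "finite S" using finite_words[of n] unfolding S_def by (rule rev_finite_subset) auto
  have "{\<omega>\<in>space M. P (Wd R \<xi> n \<omega>)} = (\<Union>w\<in>S. {\<omega>\<in>space M. Wd R \<xi> n \<omega> = w})"
    by (auto simp: S_def words_def)
  moreover have ev: "{\<omega>\<in>space M. Wd R \<xi> n \<omega> = w} \<in> sets M" for w
    using Wd_sets[of "\<lambda>v. v = w"] by simp
  moreover have "measure M (\<Union>w\<in>S. {\<omega>\<in>space M. Wd R \<xi> n \<omega> = w}) = (\<Sum>w\<in>S. measure M {\<omega>\<in>space M. Wd R \<xi> n \<omega> = w})"
    by (rule finite_measure_finite_Union[OF fS]) (use ev in \<open>auto simp: disjoint_family_on_def\<close>)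
  ultimately have "measure M {\<omega>\<in>space M. P (Wd R \<xi> n \<omega>)} = (\<Sum>w\<in>S. measure M {\<omega>\<in>space M. Wd R \<xi> n \<omega> = w})"
    by simp
  also have "\<dots> = (\<Sum>w\<in>S. wtr K p \<eta> w)"
    by (rule sum.cong) (use meas_Wd_eq in \<open>auto simp: S_def words_def\<close>)
  also have "\<dots> = (\<Sum>w\<in>words n. if P w then wtr K p \<eta> w else 0)"
    unfolding S_def by (rule sum.inter_filter[OF finite_words])
  finally show ?thesis .
qed

lemma eta_nn: "0 \<le> \<eta> $ r"
proof -
  have "0 \<le> measure M {\<omega>\<in>space M. Wd R \<xi> (length [(r, True)]) \<omega> = [(r, True)]}" by simp
  hence "0 \<le> \<eta> $ r * p $ r" using meas_Wd_eq[of "[(r, True)]"] by (simp add: bern_def del: measure_nonneg)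
  thus ?thesis using pp[of r] by (simp add: zero_le_mult_iff)
qed

lemma eta_sum: "(\<Sum>r\<in>UNIV. \<eta> $ r) = 1"
proof -
  have "(\<Sum>w\<in>words 1. wtr K p \<eta> w) = 1"
    using meas_Wd_pred[of "\<lambda>w. True" 1] prob_space by simp
  moreover have "(\<Sum>w\<in>words 1. wtr K p \<eta> w) = (\<Sum>r\<in>UNIV. \<eta> $ r)"
    by (simp add: words_Suc_sum[of _ 0, simplified] words_0 bern_def algebra_simps)
  ultimately show ?thesis by simp
qed

lemma wtr_wt0_nn: "0 \<le> wtr K p \<eta> w \<and> (\<forall>r. 0 \<le> wt0 K p \<eta> r w)"
proof (induction w)
  case Nil thus ?case by (simp add: wt0_Nil eta_nn)
next
  case (Cons y w)
  have b: "0 \<le> bern p z" for z using pp[of "fst z"] by (simp add: bern_def)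
  show ?case using Cons b Kn by (simp del: wtr.simps add: wtr_cons wt0_Cons)
qed

lemma wtr_nn: "0 \<le> wtr K p \<eta> w" and wt0_nn: "0 \<le> wt0 K p \<eta> r w"
  using wtr_wt0_nn by auto

definition gam :: "(nat \<Rightarrow> 'n) \<Rightarrow> nat \<Rightarrow> nat \<Rightarrow> 'n \<Rightarrow> real" where
  "gam i n k r = (\<Sum>w\<in>words n. if ch i w \<and> cnsA i r w \<and> fc w = k then wt0 K p \<eta> r w else 0)"

lemma gam_nn: "0 \<le> gam i n k r"
  unfolding gam_def by (rule sum_nonneg) (simp add: wt0_nn)

lemma gam_0: "gam i 0 k r = (if k = 0 \<and> r = i 0 then \<eta> $ r else 0)"
  by (simp add: gam_def words_0 wt0_Nil)

lemma gam_T_pt: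
  "(if ch i ((r, True) # w) \<and> cnsA i r' ((r, True) # w) \<and> fc ((r, True) # w) = k
      then wt0 K p \<eta> r' ((r, True) # w) else 0)
   = (if ch i w \<and> cnsA i r w \<and> fc w = k then wt0 K p \<eta> r w else 0) * p $ r * K $ r $ r'"
  by (simp only: ch.simps cnsA.simps fc_Cons wt0_Cons bern_def fst_conv snd_conv if_True simp_thms
      add_0_right not_True_eq_False if_distrib[of "\<lambda>x. x * _"] mult_zero_left conj_assoc)

lemma gam_F_pt:
  "(if ch i ((r, False) # w) \<and> cnsA i r' ((r, False) # w) \<and> fc ((r, False) # w) = k
      then wt0 K p \<eta> r' ((r, False) # w) else 0)
   = (if 0 < k \<and> r' = i k then
       (if ch i w \<and> cnsA i r w \<and> fc w = k - 1 then wt0 K p \<eta> r w else 0) * (1 - p $ r) * K $ r $ r' else 0)"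
proof -
  have "(ch i ((r, False) # w) \<and> cnsA i r' ((r, False) # w) \<and> fc ((r, False) # w) = k)
      = ((0 < k \<and> r' = i k) \<and> (ch i w \<and> cnsA i r w \<and> fc w = k - 1))"
    by auto
  moreover have "wt0 K p \<eta> r' ((r, False) # w) = wt0 K p \<eta> r w * (1 - p $ r) * K $ r $ r'"
    by (simp add: wt0_Cons bern_def)
  ultimately show ?thesis by (simp only:) auto
qed

lemma gam_Suc:
  "gam i (Suc n) k r' = (\<Sum>r\<in>UNIV. gam i n k r * p $ r * K $ r $ r')
     + (if 0 < k \<and> r' = i k then (\<Sum>r\<in>UNIV. gam i n (k - 1) r * (1 - p $ r) * K $ r $ r') else 0)"
proof -
  have T: "(\<Sum>w\<in>words n. if ch i ((r, True) # w) \<and> cnsA i r' ((r, True) # w) \<and> fc ((r, True) # w) = k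
             then wt0 K p \<eta> r' ((r, True) # w) else 0) = gam i n k r * p $ r * K $ r $ r'" for r
    unfolding gam_def sum_distrib_right gam_T_pt ..
  have F: "(\<Sum>w\<in>words n. if ch i ((r, False) # w) \<and> cnsA i r' ((r, False) # w) \<and> fc ((r, False) # w) = k
             then wt0 K p \<eta> r' ((r, False) # w) else 0)
      = (if 0 < k \<and> r' = i k then gam i n (k - 1) r * (1 - p $ r) * K $ r $ r' else 0)" for r
  proof (cases "0 < k \<and> r' = i k")
    case True
    have "(\<Sum>w\<in>words n. (if 0 < k \<and> r' = i k then (if ch i w \<and> cnsA i r w \<and> fc w = k - 1 then wt0 K p \<eta> r w else 0) * (1 - p $ r) * K $ r $ r' else 0))
        = (\<Sum>w\<in>words n. (if ch i w \<and> cnsA i r w \<and> fc w = k - 1 then wt0 K p \<eta> r w else 0) * (1 - p $ r) * K $ r $ r')"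
      by (rule sum.cong) (simp_all only: if_P[OF True])
    also have "\<dots> = gam i n (k - 1) r * (1 - p $ r) * K $ r $ r'"
      by (simp only: gam_def sum_distrib_right)
    also have "\<dots> = (if 0 < k \<and> r' = i k then gam i n (k - 1) r * (1 - p $ r) * K $ r $ r' else 0)"
      by (simp only: if_P[OF True])
    finally show ?thesis unfolding gam_F_pt .
  next
    case False
    show ?thesis unfolding gam_F_pt by (simp only: if_not_P[OF False] sum.neutral_const)
  qed
  have "gam i (Suc n) k r' = (\<Sum>r\<in>UNIV. gam i n k r * p $ r * K $ r $ r'
      + (if 0 < k \<and> r' = i k then gam i n (k - 1) r * (1 - p $ r) * K $ r $ r' else 0))"
    by (simp only: gam_def[of i "Suc n"] words_Suc_sum T F)
  also have "\<dots> = (\<Sum>r\<in>UNIV. gam i n k r * p $ r * K $ r $ r')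
     + (if 0 < k \<and> r' = i k then (\<Sum>r\<in>UNIV. gam i n (k - 1) r * (1 - p $ r) * K $ r $ r') else 0)"
    by (simp add: sum.distrib)
  finally show ?thesis .
qed

end


lemma row_sum_A:
  fixes K :: "real^'n^'n" and p v :: "real^'n"
  assumes K: "stochastic_matrix K"
  shows "(\<Sum>r\<in>UNIV. (v v* (diag_mat p ** K)) $ r) = (\<Sum>i\<in>UNIV. v $ i * p $ i)"
proof -
  have Ks: "\<And>a. (\<Sum>j\<in>UNIV. K $ a $ j) = 1" using K unfolding stochastic_matrix_def by auto
  have "(\<Sum>r\<in>UNIV. (v v* (diag_mat p ** K)) $ r) = (\<Sum>r\<in>UNIV. \<Sum>i\<in>UNIV. v $ i * p $ i * K $ i $ r)"
    by (simp add: vm_comp diag_mult_comp mult.assoc)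
  also have "\<dots> = (\<Sum>i\<in>UNIV. \<Sum>r\<in>UNIV. v $ i * p $ i * K $ i $ r)" by (rule sum.swap)
  also have "\<dots> = (\<Sum>i\<in>UNIV. v $ i * p $ i * (\<Sum>r\<in>UNIV. K $ i $ r))" by (simp add: sum_distrib_left)
  finally show ?thesis by (simp add: Ks)
qed

lemma lsol:
  fixes K :: "real^'n^'n" and p :: "real^'n" and x u :: "nat \<Rightarrow> real^'n"
  assumes K: "stochastic_matrix K" and p: "\<And>i. 0 \<le> p $ i \<and> p $ i < 1"
    and rec: "\<And>n. x (Suc n) = x n v* (diag_mat p ** K) + u n"
    and xnn: "\<And>n r. 0 \<le> x n $ r" and unn: "\<And>n r. 0 \<le> u n $ r"
    and us: "\<And>r. summable (\<lambda>n. u n $ r)"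
  shows "\<And>r. summable (\<lambda>n. x n $ r)"
    and "(\<chi> r. \<Sum>n. x n $ r) = (x 0 + (\<chi> r. \<Sum>n. u n $ r)) v* matrix_inv (mat 1 - diag_mat p ** K)"
proof -
  define A where "A = diag_mat p ** K"
  define B where "B = mat 1 - A"
  obtain i0 where i0: "\<And>i. p $ i \<le> p $ i0" using exists_max_idx[of "\<lambda>i. p $ i"] by blast
  define q where "q = p $ i0"
  have q1: "q < 1" and q0: "0 \<le> q" using p[of i0] by (auto simp: q_def)
  define s where "s n = (\<Sum>r\<in>UNIV. x n $ r)" for n
  define t where "t n = (\<Sum>r\<in>UNIV. u n $ r)" for n
  have ts: "summable t" unfolding t_def by (rule summable_sum) (use us in auto)
  define T where "T = suminf t"
  have tnn: "0 \<le> t n" for n unfolding t_def by (rule sum_nonneg) (use unn in auto)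
  have snn: "0 \<le> s n" for n unfolding s_def by (rule sum_nonneg) (use xnn in auto)
  have sstep: "s (Suc n) \<le> q * s n + t n" for n
  proof -
    have "s (Suc n) = (\<Sum>i\<in>UNIV. x n $ i * p $ i) + t n"
      by (simp add: s_def t_def rec sum.distrib row_sum_A[OF K] A_def)
    also have "(\<Sum>i\<in>UNIV. x n $ i * p $ i) \<le> (\<Sum>i\<in>UNIV. x n $ i * q)"
      by (rule sum_mono) (use xnn i0 in \<open>auto intro: mult_left_mono simp: q_def\<close>)
    also have "\<dots> = q * s n" unfolding s_def sum_distrib_left by (simp add: mult.commute)
    finally show ?thesis by simp
  qed
  have bnd: "(1 - q) * (\<Sum>n<N. s n) \<le> s 0 + T" for N
  proof (cases N)
    case 0 thus ?thesis using snn[of 0] tnn ts by (simp add: T_def suminf_nonneg)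
  next
    case (Suc N')
    have "(\<Sum>n<Suc N'. s n) = s 0 + (\<Sum>n<N'. s (Suc n))" by (rule sum.lessThan_Suc_shift)
    also have "\<dots> \<le> s 0 + (\<Sum>n<N'. q * s n + t n)"
      by (rule add_left_mono, rule sum_mono, rule sstep)
    also have "\<dots> = s 0 + q * (\<Sum>n<N'. s n) + (\<Sum>n<N'. t n)"
      by (simp add: sum.distrib sum_distrib_left)
    finally have a: "(\<Sum>n<Suc N'. s n) \<le> s 0 + q * (\<Sum>n<N'. s n) + (\<Sum>n<N'. t n)" .
    have b: "(\<Sum>n<N'. t n) \<le> T" unfolding T_def by (rule sum_le_suminf[OF ts]) (use tnn in auto)
    have c: "q * (\<Sum>n<N'. s n) \<le> q * (\<Sum>n<Suc N'. s n)"
      by (rule mult_left_mono) (use snn q0 in auto)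
    have "(1 - q) * (\<Sum>n<Suc N'. s n) \<le> s 0 + T" using a b c by (simp add: algebra_simps)
    thus ?thesis using Suc by simp
  qed
  have ss: "summable s"
  proof (rule bounded_imp_summable)
    show "0 \<le> s n" for n by (rule snn)
    show "(\<Sum>k\<le>n. s k) \<le> (s 0 + T) / (1 - q)" for n
      using bnd[of "Suc n"] q1 by (simp add: lessThan_Suc_atMost field_simps)
  qed
  show xs: "summable (\<lambda>n. x n $ r)" for r
  proof (rule summable_comparison_test[OF _ ss])
    have "x n $ r \<le> s n" for n unfolding s_def
      by (rule member_le_sum) (use xnn in auto)
    thus "\<exists>N. \<forall>n\<ge>N. norm (x n $ r) \<le> s n" using xnn by auto
  qed
  define X where "X = (\<chi> r. \<Sum>n. x n $ r)"
  define U where "U = (\<chi> r. \<Sum>n. u n $ r)"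
  have eq: "X - x 0 = X v* A + U"
  proof -
    have "(X - x 0) $ r = (X v* A + U) $ r" for r
    proof -
      have "(X - x 0) $ r = (\<Sum>n. x (Suc n) $ r)"
        using suminf_split_head[OF xs[of r]] by (simp add: X_def)
      also have "\<dots> = (\<Sum>n. (\<Sum>i\<in>UNIV. x n $ i * A $ i $ r) + u n $ r)"
        by (simp add: rec vm_comp A_def)
      also have "\<dots> = (\<Sum>n. \<Sum>i\<in>UNIV. x n $ i * A $ i $ r) + (\<Sum>n. u n $ r)"
        by (rule suminf_add[symmetric]) (auto intro!: summable_sum summable_mult2 xs us)
      also have "(\<Sum>n. \<Sum>i\<in>UNIV. x n $ i * A $ i $ r) = (\<Sum>i\<in>UNIV. \<Sum>n. x n $ i * A $ i $ r)"
        by (rule suminf_sum) (auto intro!: summable_mult2 xs)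
      also have "\<dots> = (\<Sum>i\<in>UNIV. (\<Sum>n. x n $ i) * A $ i $ r)"
        by (rule sum.cong) (auto intro!: suminf_mult2[symmetric] xs)
      finally show ?thesis by (simp add: X_def U_def vm_comp)
    qed
    thus ?thesis by (simp add: vec_eq_iff)
  qed
  have invB: "invertible B" unfolding B_def A_def by (rule invertible_B[OF K p])
  have BBi: "B ** matrix_inv B = mat 1" using matrix_inv_props[OF invB] by simp
  have "X v* B = x 0 + U" using eq by (simp add: B_def vector_matrix_mult_diff_rdistrib algebra_simps)
  hence "X = (x 0 + U) v* matrix_inv B"
    by (metis BBi vector_matrix_mul_assoc vector_matrix_mul_rid)
  thus "(\<chi> r. \<Sum>n. x n $ r) = (x 0 + (\<chi> r. \<Sum>n. u n $ r)) v* matrix_inv (mat 1 - diag_mat p ** K)"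
    by (simp add: X_def U_def B_def A_def)
qed


lemma axis_vm: "(axis a 1 v* M) $ j = M $ a $ j"
proof -
  have "(axis a 1 v* M) $ j = (\<Sum>i\<in>UNIV. if i = a then M $ a $ j else 0)"
    unfolding vm_comp by (rule sum.cong) (auto simp: axis_def)
  thus ?thesis by simp
qed

lemma delta_vec: "(\<chi> r. if r = a then c else 0) = c *s axis a (1::real)"
  by (simp add: vec_eq_iff axis_def)

lemma suminf_mult3: "summable (f :: nat \<Rightarrow> real) \<Longrightarrow> (\<Sum>n. f n * a * b) = suminf f * a * b"
  using suminf_mult2[of f "a * b"] by (simp add: mult.assoc)

lemma summable_mult3: "summable (f :: nat \<Rightarrow> real) \<Longrightarrow> summable (\<lambda>n. f n * a * b)"
  using summable_mult2[of f "a * b"] by (simp add: mult.assoc)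

context cookie
begin

definition Bi where "Bi = matrix_inv (mat 1 - diag_mat p ** K)"
definition Dm where "Dm = diag_mat (1 - p) ** K"
definition Pm where "Pm = Bi ** Dm"

definition ee :: "(nat \<Rightarrow> 'n) \<Rightarrow> nat \<Rightarrow> real" where
  "ee i k = \<eta> $ (i 0) * (\<Prod>k'<k. Pm $ i k' $ i (Suc k'))"

lemma pp': "0 \<le> p $ i \<and> p $ i < 1" using pp[of i] by simp

lemma cvec_Dm: "(v v* Dm) $ j = (\<Sum>r\<in>UNIV. v $ r * (1 - p $ r) * K $ r $ j)"
  by (simp add: Dm_def vm_comp diag_mult_comp mult.assoc)

lemma levels:
  "(\<forall>r. summable (\<lambda>n. gam i n k r)) \<and> (\<chi> r. \<Sum>n. gam i n k r) = ee i k *s (axis (i k) 1 v* Bi)"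
proof (induction k)
  case 0
  define x where "x n = (\<chi> r. gam i n 0 r)" for n
  define u :: "nat \<Rightarrow> real^'n" where "u n = 0" for n
  have rec: "x (Suc n) = x n v* (diag_mat p ** K) + u n" for n
    by (simp add: x_def u_def vec_eq_iff gam_Suc vm_comp diag_mult_comp mult.assoc)
  have x0: "x 0 = \<eta> $ (i 0) *s axis (i 0) 1"
    by (simp add: x_def gam_0 vec_eq_iff axis_def)
  have xnn: "0 \<le> x n $ r" for n r by (simp add: x_def gam_nn)
  have unn: "0 \<le> u n $ r" for n r by (simp add: u_def)
  have us: "summable (\<lambda>n. u n $ r)" for r by (simp add: u_def)
  note L = lsol[OF Kst pp' rec xnn unn us]
  have u0: "(\<chi> r. \<Sum>n. u n $ r) = 0" by (simp add: u_def vec_eq_iff)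
  have "(\<chi> r. \<Sum>n. gam i n 0 r) = (\<chi> r. \<Sum>n. x n $ r)" by (simp add: x_def)
  also have "\<dots> = (x 0 + (\<chi> r. \<Sum>n. u n $ r)) v* matrix_inv (mat 1 - diag_mat p ** K)" by (rule L(2))
  also have "\<dots> = ee i 0 *s (axis (i 0) 1 v* Bi)"
    by (simp only: u0 x0 add_0_right) (simp add: ee_def Bi_def scalar_vector_matrix_assoc)
  finally show ?case using L(1) by (simp add: x_def)
next
  case (Suc k)
  define x where "x n = (\<chi> r. gam i n (Suc k) r)" for n
  define c where "c n = (\<Sum>r\<in>UNIV. gam i n k r * (1 - p $ r) * K $ r $ i (Suc k))" for n
  define u :: "nat \<Rightarrow> real^'n" where "u n = (\<chi> r. if r = i (Suc k) then c n else 0)" for n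
  have rec: "x (Suc n) = x n v* (diag_mat p ** K) + u n" for n
    by (simp add: x_def u_def c_def vec_eq_iff gam_Suc vm_comp diag_mult_comp mult.assoc)
  have x0: "x 0 = 0" by (simp add: x_def gam_0 vec_eq_iff)
  have cnn: "0 \<le> c n" for n unfolding c_def
  proof (rule sum_nonneg)
    fix r show "0 \<le> gam i n k r * (1 - p $ r) * K $ r $ i (Suc k)"
      using gam_nn[of i n k r] Kn pp'[of r] by simp
  qed
  have sk: "summable (\<lambda>n. gam i n k r)" for r using Suc.IH by blast
  have cs: "summable c" unfolding c_def
    by (rule summable_sum) (rule summable_mult3[OF sk])
  have csum: "suminf c = ee i (Suc k)"
  proof -
    have "suminf c = (\<Sum>r\<in>UNIV. \<Sum>n. gam i n k r * (1 - p $ r) * K $ r $ i (Suc k))"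
      unfolding c_def by (rule suminf_sum) (rule summable_mult3[OF sk])
    also have "\<dots> = (\<Sum>r\<in>UNIV. (\<Sum>n. gam i n k r) * (1 - p $ r) * K $ r $ i (Suc k))"
      by (rule sum.cong[OF refl], rule suminf_mult3[OF sk])
    also have "\<dots> = ((\<chi> r. \<Sum>n. gam i n k r) v* Dm) $ i (Suc k)" by (simp add: cvec_Dm)
    also have "\<dots> = ee i k * (axis (i k) 1 v* Pm) $ i (Suc k)"
      using Suc.IH by (simp add: scalar_vector_matrix_assoc vector_matrix_mul_assoc Pm_def)
    also have "\<dots> = ee i (Suc k)" by (simp add: axis_vm ee_def)
    finally show ?thesis .
  qed
  have xnn: "0 \<le> x n $ r" for n r by (simp add: x_def gam_nn)
  have unn: "0 \<le> u n $ r" for n r by (simp add: u_def cnn)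
  have us: "summable (\<lambda>n. u n $ r)" for r by (cases "r = i (Suc k)") (simp_all add: u_def cs)
  note L = lsol[OF Kst pp' rec xnn unn us]
  have u0: "(\<chi> r. \<Sum>n. u n $ r) = ee i (Suc k) *s axis (i (Suc k)) 1"
    by (simp add: u_def vec_eq_iff csum[symmetric] axis_def)
  have "(\<chi> r. \<Sum>n. gam i n (Suc k) r) = (\<chi> r. \<Sum>n. x n $ r)" by (simp add: x_def)
  also have "\<dots> = (x 0 + (\<chi> r. \<Sum>n. u n $ r)) v* matrix_inv (mat 1 - diag_mat p ** K)" by (rule L(2))
  also have "\<dots> = ee i (Suc k) *s (axis (i (Suc k)) 1 v* Bi)"
    by (simp only: u0 x0 add_0_left) (simp add: Bi_def scalar_vector_matrix_assoc)
  finally show ?case using L(1) by (simp add: x_def)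
qed

lemma tau_sums:
  assumes "1 \<le> m"
  shows "(\<lambda>n. \<Sum>r\<in>UNIV. gam i n (m - 1) r * (1 - p $ r) * K $ r $ i m) sums ee i m"
proof -
  obtain k where m: "m = Suc k" using assms by (cases m) auto
  have sk: "summable (\<lambda>n. gam i n k r)" for r using levels[of i k] by simp
  have "(\<Sum>n. \<Sum>r\<in>UNIV. gam i n k r * (1 - p $ r) * K $ r $ i (Suc k)) = ee i (Suc k)"
  proof -
    have "(\<Sum>n. \<Sum>r\<in>UNIV. gam i n k r * (1 - p $ r) * K $ r $ i (Suc k)) = (\<Sum>r\<in>UNIV. \<Sum>n. gam i n k r * (1 - p $ r) * K $ r $ i (Suc k))"
      by (rule suminf_sum) (rule summable_mult3[OF sk])
    also have "\<dots> = (\<Sum>r\<in>UNIV. (\<Sum>n. gam i n k r) * (1 - p $ r) * K $ r $ i (Suc k))"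
      by (rule sum.cong[OF refl], rule suminf_mult3[OF sk])
    also have "\<dots> = ((\<chi> r. \<Sum>n. gam i n k r) v* Dm) $ i (Suc k)" by (simp add: cvec_Dm)
    also have "\<dots> = ee i k * (axis (i k) 1 v* Pm) $ i (Suc k)"
      using levels[of i k] by (simp add: scalar_vector_matrix_assoc vector_matrix_mul_assoc Pm_def)
    also have "\<dots> = ee i (Suc k)" by (simp add: axis_vm ee_def)
    finally show ?thesis .
  qed
  moreover have "summable (\<lambda>n. \<Sum>r\<in>UNIV. gam i n k r * (1 - p $ r) * K $ r $ i (Suc k))"
    by (rule summable_sum) (rule summable_mult3[OF sk])
  ultimately have "(\<lambda>n. \<Sum>r\<in>UNIV. gam i n k r * (1 - p $ r) * K $ r $ i (Suc k)) sums ee i (Suc k)"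
    using summable_sums by fastforce
  thus ?thesis by (simp add: m)
qed

end


definition Fc :: "(nat \<Rightarrow> 'w \<Rightarrow> bool) \<Rightarrow> 'w \<Rightarrow> nat \<Rightarrow> nat" where
  "Fc \<xi> \<omega> t = card {l\<in>{1..t}. \<not> \<xi> l \<omega>}"

lemma Fc_0 [simp]: "Fc \<xi> \<omega> 0 = 0" by (simp add: Fc_def)

lemma Fc_Suc: "Fc \<xi> \<omega> (Suc t) = Fc \<xi> \<omega> t + (if \<xi> (Suc t) \<omega> then 0 else 1)"
proof -
  have "{l\<in>{1..Suc t}. \<not> \<xi> l \<omega>} = (if \<xi> (Suc t) \<omega> then {l\<in>{1..t}. \<not> \<xi> l \<omega>} else insert (Suc t) {l\<in>{1..t}. \<not> \<xi> l \<omega>})"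
    by (auto simp: le_Suc_eq)
  thus ?thesis by (simp add: Fc_def)
qed

lemma Fc_le: "Fc \<xi> \<omega> t \<le> t"
proof -
  have "Fc \<xi> \<omega> t \<le> card {1..t}" unfolding Fc_def by (rule card_mono) auto
  thus ?thesis by simp
qed

lemma Fc_mono: "a \<le> b \<Longrightarrow> Fc \<xi> \<omega> a \<le> Fc \<xi> \<omega> b"
  unfolding Fc_def by (rule card_mono) auto

lemma fc_Wd: "fc (Wd R \<xi> n \<omega>) = Fc \<xi> \<omega> n"
  by (induction n) (auto simp: Fc_Suc)

lemma cnsA_Wd_Suc: "cnsA i r (Wd R \<xi> (Suc j) \<omega>) \<longleftrightarrow> (\<not> \<xi> (Suc j) \<omega> \<longrightarrow> r = i (Fc \<xi> \<omega> (Suc j)))"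
  by (simp add: fc_Wd Fc_Suc)

lemma ch_Wd: "ch i (Wd R \<xi> n \<omega>) \<Longrightarrow> 1 \<le> j \<Longrightarrow> j \<le> n \<Longrightarrow> cnsA i (R j \<omega>) (Wd R \<xi> (j - 1) \<omega>)"
proof (induction n arbitrary: j)
  case 0 thus ?case by simp
next
  case (Suc n)
  show ?case
  proof (cases "j = Suc n")
    case True thus ?thesis using Suc.prems by simp
  next
    case False thus ?thesis using Suc by simp
  qed
qed

lemma S_succ_eq:
  assumes "1 \<le> k" "k \<le> Fc \<xi> \<omega> n"
  defines "t \<equiv> LEAST t. k \<le> Fc \<xi> \<omega> t"
  shows "S_succ \<xi> k \<omega> = t - k" "Fc \<xi> \<omega> t = k" "\<not> \<xi> t \<omega>" "1 \<le> t" "t \<le> n"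
proof -
  have kt: "k \<le> Fc \<xi> \<omega> t" unfolding t_def by (rule LeastI[of _ n]) (rule assms(2))
  show tn: "t \<le> n" unfolding t_def by (rule Least_le) (rule assms(2))
  have t0: "t \<noteq> 0" using kt assms(1) by (cases t) auto
  then obtain t' where t': "t = Suc t'" by (cases t) auto
  have "\<not> k \<le> Fc \<xi> \<omega> t'" unfolding t_def by (rule not_less_Least) (simp add: t'[unfolded t_def])
  hence lt: "Fc \<xi> \<omega> t' < k" by simp
  have st: "Fc \<xi> \<omega> t = Fc \<xi> \<omega> t' + (if \<xi> t \<omega> then 0 else 1)" by (simp add: t' Fc_Suc)
  show Fk: "Fc \<xi> \<omega> t = k" using st lt kt by (auto split: if_splits)
  show "\<not> \<xi> t \<omega>" using st lt kt by (auto split: if_splits)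
  show "1 \<le> t" using t0 by simp
  have tk: "k \<le> t" using Fk Fc_le[of \<xi> \<omega> t] by simp
  have "(LEAST s. card {j\<in>{1..s+k}. \<not> \<xi> j \<omega>} = k) = t - k"
  proof (rule Least_equality)
    show "card {j\<in>{1..t-k+k}. \<not> \<xi> j \<omega>} = k" using Fk tk by (simp add: Fc_def)
  next
    fix s assume "card {j\<in>{1..s+k}. \<not> \<xi> j \<omega>} = k"
    hence "k \<le> Fc \<xi> \<omega> (s + k)" by (simp add: Fc_def)
    hence "t \<le> s + k" unfolding t_def by (rule Least_le)
    thus "t - k \<le> s" by simp
  qed
  thus "S_succ \<xi> k \<omega> = t - k" by (simp add: S_succ_def)
qed

lemma I_type_from:
  assumes R1: "R 1 \<omega> = i 0"
    and cons: "\<And>t. 1 \<le> t \<Longrightarrow> t \<le> n \<Longrightarrow> \<not> \<xi> t \<omega> \<Longrightarrow> R (Suc t) \<omega> = i (Fc \<xi> \<omega> t)"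
    and Fn: "Fc \<xi> \<omega> n = m"
  shows "\<forall>k\<le>m. I_type R \<xi> k \<omega> = i k"
proof (intro allI impI)
  fix k assume km: "k \<le> m"
  show "I_type R \<xi> k \<omega> = i k"
  proof (cases "k = 0")
    case True thus ?thesis using R1 by (simp add: I_type_def)
  next
    case False
    hence k1: "1 \<le> k" by simp
    have kF: "k \<le> Fc \<xi> \<omega> n" using km Fn by simp
    define t where "t = (LEAST t. k \<le> Fc \<xi> \<omega> t)"
    note S = S_succ_eq[OF k1 kF, folded t_def]
    have tk: "k \<le> t" using S(2) Fc_le[of \<xi> \<omega> t] by simp
    have "I_type R \<xi> k \<omega> = R (Suc t) \<omega>" using False S(1) tk by (simp add: I_type_def)
    also have "\<dots> = i (Fc \<xi> \<omega> t)" by (rule cons[OF S(4) S(5) S(3)])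
    finally show ?thesis using S(2) by simp
  qed
qed

definition goodP :: "(nat \<Rightarrow> 'n) \<Rightarrow> nat \<Rightarrow> ('n \<times> bool) list \<Rightarrow> bool" where
  "goodP i m w = (case w of [] \<Rightarrow> False | y # h \<Rightarrow> ch i h \<and> cnsA i (fst y) h \<and> fst y = i m \<and> fc h = m
       \<and> (case h of [] \<Rightarrow> False | z # _ \<Rightarrow> \<not> snd z))"

lemma goodP_Wd:
  assumes "goodP i m (Wd R \<xi> (Suc n) \<omega>)"
  shows "\<forall>k\<le>m. I_type R \<xi> k \<omega> = i k" "Fc \<xi> \<omega> n = m" "1 \<le> n" "\<not> \<xi> n \<omega>"
proof -
  have ch: "ch i (Wd R \<xi> n \<omega>)" and cA: "cnsA i (R (Suc n) \<omega>) (Wd R \<xi> n \<omega>)"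
    and fcn: "fc (Wd R \<xi> n \<omega>) = m"
    and last: "(case Wd R \<xi> n \<omega> of [] \<Rightarrow> False | z # _ \<Rightarrow> \<not> snd z)"
    using assms by (auto simp: goodP_def)
  have ch2: "ch i (Wd R \<xi> (Suc n) \<omega>)" using ch cA by simp
  show Fn: "Fc \<xi> \<omega> n = m" using fcn by (simp add: fc_Wd)
  obtain n' where n': "n = Suc n'" using last by (cases n) auto
  show "1 \<le> n" using n' by simp
  show "\<not> \<xi> n \<omega>" using last by (simp add: n')
  have R1: "R 1 \<omega> = i 0" using ch_Wd[OF ch2, of 1] by simp
  have cons: "R (Suc t) \<omega> = i (Fc \<xi> \<omega> t)" if tt: "1 \<le> t" "t \<le> n" "\<not> \<xi> t \<omega>" for t
  proof -
    obtain t' where t': "t = Suc t'" using tt(1) by (cases t) auto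
    have "cnsA i (R (Suc t) \<omega>) (Wd R \<xi> (Suc t - 1) \<omega>)" by (rule ch_Wd[OF ch2]) (use tt in auto)
    thus ?thesis using tt(3) by (simp add: t' cnsA_Wd_Suc del: Wd.simps)
  qed
  show "\<forall>k\<le>m. I_type R \<xi> k \<omega> = i k" by (rule I_type_from[where R=R and \<xi>=\<xi> and \<omega>=\<omega> and i=i and n=n and m=m, OF R1 cons Fn])
qed


definition lsts :: "nat \<Rightarrow> ('n::finite) list set" where "lsts n = {l. length l = n}"

lemma finite_lsts: "finite (lsts n)"
  unfolding lsts_def using finite_lists_length_eq[of "UNIV :: 'a set" n] by simp

lemma lsts_0: "lsts 0 = {[]}" by (auto simp: lsts_def)

lemma lsts_Suc_sum:
  fixes f :: "('n::finite) list \<Rightarrow> real"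
  shows "(\<Sum>l\<in>lsts (Suc n). f l) = (\<Sum>a\<in>UNIV. \<Sum>l\<in>lsts n. f (a # l))"
proof -
  have im: "lsts (Suc n) = (\<lambda>(a, l). a # l) ` (UNIV \<times> lsts n)"
  proof
    show "lsts (Suc n) \<subseteq> (\<lambda>(a, l). a # l) ` (UNIV \<times> lsts n)"
    proof
      fix w assume "w \<in> lsts (Suc n)"
      then obtain y w' where "w = y # w'" "length w' = n" by (cases w) (auto simp: lsts_def)
      thus "w \<in> (\<lambda>(a, l). a # l) ` (UNIV \<times> lsts n)" by (auto simp: lsts_def image_iff)
    qed
  qed (auto simp: lsts_def)
  have inj: "inj_on (\<lambda>(a, l). a # l) (UNIV \<times> lsts n)" by (auto simp: inj_on_def)
  have "(\<Sum>l\<in>lsts (Suc n). f l) = sum f ((\<lambda>(a, l). a # l) ` (UNIV \<times> lsts n))"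
    by (simp only: im)
  also have "\<dots> = (\<Sum>x\<in>UNIV \<times> lsts n. f ((\<lambda>(a, l). a # l) x))"
    by (rule sum.reindex[OF inj, unfolded comp_def])
  also have "\<dots> = (\<Sum>(a, l)\<in>UNIV \<times> lsts n. f (a # l))"
    by (rule sum.cong) auto
  also have "\<dots> = (\<Sum>a\<in>UNIV. \<Sum>l\<in>lsts n. f (a # l))"
    by (rule sum.cartesian_product[symmetric])
  finally show ?thesis .
qed

lemma not_both_Fc:
  assumes "a < b" "Fc \<xi> \<omega> a = m" "Fc \<xi> \<omega> b = m" "\<not> \<xi> b \<omega>" "1 \<le> b"
  shows False
proof -
  obtain b' where b: "b = Suc b'" using assms(5) by (cases b) auto
  have "Fc \<xi> \<omega> b = Fc \<xi> \<omega> b' + 1" using assms(4) by (simp add: b Fc_Suc)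
  moreover have "Fc \<xi> \<omega> a \<le> Fc \<xi> \<omega> b'" by (rule Fc_mono) (use assms(1) b in simp)
  ultimately show False using assms(2,3) by simp
qed

context cookie
begin

lemma Pm_rows: "(\<Sum>j\<in>UNIV. Pm $ a $ j) = 1"
proof -
  define one :: "real^'n" where "one = (\<chi> i. 1)"
  define B where "B = mat 1 - diag_mat p ** K"
  have invB: "invertible B" unfolding B_def by (rule invertible_B[OF Kst pp'])
  have BiB: "Bi ** B = mat 1" using matrix_inv_props[OF invB] by (simp add: Bi_def B_def)
  have "Dm *v one = B *v one"
    by (simp add: Dm_def B_def one_def vec_eq_iff mv_comp diag_mult_comp matrix_vector_mult_diff_rdistrib
        sum_distrib_left[symmetric] Ks mult.assoc[symmetric])
  hence "Pm *v one = one"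
    by (metis Pm_def BiB matrix_vector_mul_assoc matrix_vector_mul_lid)
  hence "(Pm *v one) $ a = 1" by (simp add: one_def)
  thus ?thesis by (simp add: mv_comp one_def)
qed

lemma S_meas: "S_succ \<xi> k \<in> measurable M (count_space UNIV)"
proof -
  have e: "S_succ \<xi> k = (\<lambda>\<omega>. LEAST s. (\<lambda>s \<omega>. fc (Wd R \<xi> (s + k) \<omega>) = k) s \<omega>)"
    by (simp add: fun_eq_iff S_succ_def fc_Wd Fc_def)
  have m: "(\<lambda>\<omega>. (\<lambda>w. fc w = k) (Wd R \<xi> (s + k) \<omega>)) \<in> measurable M (count_space UNIV)" for s
    by (rule measurable_compose[OF Wd_meas]) (simp only: measurable_count_space_eq1 space_count_space, rule funcsetI, rule UNIV_I)
  have "(\<lambda>\<omega>. LEAST s. (\<lambda>s \<omega>. fc (Wd R \<xi> (s + k) \<omega>) = k) s \<omega>) \<in> measurable M (count_space UNIV)"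
    by (rule measurable_Least) (rule m)
  thus ?thesis by (subst e)
qed

lemma I_meas: "I_type R \<xi> k \<in> measurable M (count_space UNIV)"
proof (cases "k = 0")
  case True
  have "I_type R \<xi> k = R 1" using True by (simp add: fun_eq_iff I_type_def)
  thus ?thesis using R_meas[of 1] by (simp only:)
next
  case False
  have e: "I_type R \<xi> k = (\<lambda>\<omega>. (\<lambda>s \<omega>. R (s + k + 1) \<omega>) (S_succ \<xi> k \<omega>) \<omega>)"
    using False by (simp add: fun_eq_iff I_type_def)
  have "(\<lambda>\<omega>. (\<lambda>s \<omega>. R (s + k + 1) \<omega>) (S_succ \<xi> k \<omega>) \<omega>) \<in> measurable M (count_space UNIV)"
    by (rule measurable_compose_countable[OF R_meas S_meas])
  thus ?thesis by (subst e)
qed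

definition Ev :: "(nat \<Rightarrow> 'n) \<Rightarrow> nat \<Rightarrow> 'w set" where
  "Ev i m = {\<omega>\<in>space M. \<forall>k\<le>m. I_type R \<xi> k \<omega> = i k}"

lemma Ev_sets: "Ev i m \<in> sets M"
proof -
  have A: "{\<omega>\<in>space M. I_type R \<xi> k \<omega> = i k} \<in> sets M" for k
  proof -
    have "I_type R \<xi> k -` {i k} \<inter> space M \<in> sets M"
      by (rule measurable_sets[OF I_meas]) (simp only: sets_count_space Pow_UNIV, rule UNIV_I)
    moreover have "I_type R \<xi> k -` {i k} \<inter> space M = {\<omega>\<in>space M. I_type R \<xi> k \<omega> = i k}" by blast
    ultimately show ?thesis by metis
  qed
  have "(\<Inter>k\<in>{..m}. {\<omega>\<in>space M. I_type R \<xi> k \<omega> = i k}) \<in> sets M"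
    by (rule sets.finite_INT) (simp, simp, rule A)
  moreover have "Ev i m = (\<Inter>k\<in>{..m}. {\<omega>\<in>space M. I_type R \<xi> k \<omega> = i k})"
    unfolding Ev_def by blast
  ultimately show ?thesis by metis
qed

definition lastF :: "('n \<times> bool) list \<Rightarrow> bool" where
  "lastF h = (case h of [] \<Rightarrow> False | z # _ \<Rightarrow> \<not> snd z)"

definition Phi :: "(nat \<Rightarrow> 'n) \<Rightarrow> nat \<Rightarrow> nat \<Rightarrow> real" where
  "Phi i m n = (\<Sum>h\<in>words n. if ch i h \<and> cnsA i (i m) h \<and> fc h = m \<and> lastF h then wt0 K p \<eta> (i m) h else 0)"

lemma meas_Fev: "measure M {\<omega>\<in>space M. goodP i m (Wd R \<xi> (Suc n) \<omega>)} = Phi i m n"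
proof -
  define G where "G h \<longleftrightarrow> ch i h \<and> cnsA i (i m) h \<and> fc h = m \<and> lastF h" for h
  have gp: "goodP i m ((r, b) # h) \<longleftrightarrow> r = i m \<and> G h" for r b h
    by (auto simp: goodP_def G_def lastF_def)
  have pt: "(if goodP i m ((r, True) # h) then wtr K p \<eta> ((r, True) # h) else 0)
      + (if goodP i m ((r, False) # h) then wtr K p \<eta> ((r, False) # h) else 0)
      = (if r = i m then (if G h then wt0 K p \<eta> (i m) h else 0) else 0)" for r h
    by (simp only: gp wtr_cons fst_conv) (auto simp: bern_def algebra_simps)
  have "measure M {\<omega>\<in>space M. goodP i m (Wd R \<xi> (Suc n) \<omega>)}
      = (\<Sum>w\<in>words (Suc n). if goodP i m w then wtr K p \<eta> w else 0)" by (rule meas_Wd_pred)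
  also have "\<dots> = (\<Sum>r\<in>UNIV. \<Sum>h\<in>words n. (if goodP i m ((r, True) # h) then wtr K p \<eta> ((r, True) # h) else 0)
      + (if goodP i m ((r, False) # h) then wtr K p \<eta> ((r, False) # h) else 0))"
    by (simp only: words_Suc_sum sum.distrib)
  also have "\<dots> = (\<Sum>r\<in>UNIV. \<Sum>h\<in>words n. (if r = i m then (if G h then wt0 K p \<eta> (i m) h else 0) else 0))"
    by (simp only: pt)
  also have "\<dots> = (\<Sum>r\<in>UNIV. if r = i m then (\<Sum>h\<in>words n. if G h then wt0 K p \<eta> (i m) h else 0) else 0)"
    by (rule sum.cong) auto
  also have "\<dots> = Phi i m n" by (simp add: Phi_def G_def)
  finally show ?thesis .
qed

lemma Phi_0: "Phi i m 0 = 0" by (simp add: Phi_def words_0 lastF_def)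

lemma Phi_Suc:
  assumes "1 \<le> m"
  shows "Phi i m (Suc n) = (\<Sum>r\<in>UNIV. gam i n (m - 1) r * (1 - p $ r) * K $ r $ i m)"
proof -
  have pT: "(if ch i ((r, True) # h) \<and> cnsA i (i m) ((r, True) # h) \<and> fc ((r, True) # h) = m \<and> lastF ((r, True) # h)
      then wt0 K p \<eta> (i m) ((r, True) # h) else 0) = 0" for r h
    by (simp add: lastF_def)
  have pF: "(if ch i ((r, False) # h) \<and> cnsA i (i m) ((r, False) # h) \<and> fc ((r, False) # h) = m \<and> lastF ((r, False) # h)
      then wt0 K p \<eta> (i m) ((r, False) # h) else 0)
      = (if ch i h \<and> cnsA i r h \<and> fc h = m - 1 then wt0 K p \<eta> r h else 0) * (1 - p $ r) * K $ r $ i m" for r h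
  proof -
    have "(ch i ((r, False) # h) \<and> cnsA i (i m) ((r, False) # h) \<and> fc ((r, False) # h) = m \<and> lastF ((r, False) # h))
        = (ch i h \<and> cnsA i r h \<and> fc h = m - 1)" using assms by (auto simp: lastF_def)
    moreover have "wt0 K p \<eta> (i m) ((r, False) # h) = wt0 K p \<eta> r h * (1 - p $ r) * K $ r $ i m"
      by (simp add: wt0_Cons bern_def)
    ultimately show ?thesis by simp
  qed
  have "Phi i m (Suc n) = (\<Sum>r\<in>UNIV. 0 + (\<Sum>h\<in>words n. (if ch i h \<and> cnsA i r h \<and> fc h = m - 1 then wt0 K p \<eta> r h else 0) * (1 - p $ r) * K $ r $ i m))"
    by (simp only: Phi_def words_Suc_sum pT pF sum.neutral_const)
  also have "\<dots> = (\<Sum>r\<in>UNIV. gam i n (m - 1) r * (1 - p $ r) * K $ r $ i m)"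
    by (simp add: gam_def sum_distrib_right)
  finally show ?thesis .
qed

lemma LB:
  assumes "1 \<le> m"
  shows "ee i m \<le> measure M (Ev i m)"
proof -
  define F where "F n = {\<omega>\<in>space M. goodP i m (Wd R \<xi> (Suc n) \<omega>)}" for n
  have Fs: "range F \<subseteq> sets M" unfolding F_def using Wd_sets by blast
  have FE: "(\<Union>n. F n) \<subseteq> Ev i m"
  proof
    fix \<omega> assume "\<omega> \<in> (\<Union>n. F n)"
    then obtain n where "\<omega> \<in> F n" by blast
    hence "\<omega> \<in> space M" "goodP i m (Wd R \<xi> (Suc n) \<omega>)" by (simp_all add: F_def)
    thus "\<omega> \<in> Ev i m" using goodP_Wd(1)[of i m R \<xi> n \<omega>] unfolding Ev_def by blast
  qed
  have disj: "disjoint_family F"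
    unfolding disjoint_family_on_def
  proof (intro ballI impI)
    fix a b :: nat assume "a \<noteq> b"
    show "F a \<inter> F b = {}"
    proof (rule ccontr)
      assume "F a \<inter> F b \<noteq> {}"
      then obtain \<omega> where wa: "goodP i m (Wd R \<xi> (Suc a) \<omega>)" and wb: "goodP i m (Wd R \<xi> (Suc b) \<omega>)"
        unfolding F_def by blast
      note A = goodP_Wd[OF wa] and B = goodP_Wd[OF wb]
      show False
      proof (cases "a < b")
        case True show False by (rule not_both_Fc[OF True A(2) B(2) B(4) B(3)])
      next
        case False
        hence "b < a" using \<open>a \<noteq> b\<close> by simp
        thus False using not_both_Fc[OF _ B(2) A(2) A(4) A(3)] by blast
      qed
    qed
  qed
  have s1: "(\<lambda>n. measure M (F n)) sums measure M (\<Union>n. F n)" by (rule finite_measure_UNION[OF Fs disj])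
  have mF: "measure M (F n) = Phi i m n" for n unfolding F_def by (rule meas_Fev)
  have "(\<lambda>n. measure M (F (Suc n))) sums ee i m"
    unfolding mF Phi_Suc[OF assms] by (rule tau_sums[OF assms])
  hence "(\<lambda>n. measure M (F n)) sums (ee i m + measure M (F 0))" by (rule iffD1[OF sums_Suc_iff])
  hence "(\<lambda>n. measure M (F n)) sums ee i m" by (simp only: mF Phi_0 add_0_right)
  hence "measure M (\<Union>n. F n) = ee i m" using s1 sums_unique2 by blast
  moreover have "measure M (\<Union>n. F n) \<le> measure M (Ev i m)" by (rule finite_measure_mono[OF FE Ev_sets])
  ultimately show ?thesis by simp
qed

lemma exact0: "measure M (Ev i 0) = ee i 0"
proof -
  have "Ev i 0 = {\<omega>\<in>space M. (\<lambda>w. fst (hd w) = i 0) (Wd R \<xi> 1 \<omega>)}"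
    by (auto simp: Ev_def I_type_def)
  hence "measure M (Ev i 0) = (\<Sum>w\<in>words 1. if fst (hd w) = i 0 then wtr K p \<eta> w else 0)"
    using meas_Wd_pred[of "\<lambda>w. fst (hd w) = i 0" 1] by (simp only:)
  also have "\<dots> = (\<Sum>r\<in>UNIV. (if fst (hd [(r, True)]) = i 0 then wtr K p \<eta> [(r, True)] else 0)
        + (if fst (hd [(r, False)]) = i 0 then wtr K p \<eta> [(r, False)] else 0))"
    by (simp only: One_nat_def words_Suc_sum words_0 sum.insert finite.emptyI empty_iff sum.empty add_0_right simp_thms)
  also have "\<dots> = (\<Sum>r\<in>UNIV. if r = i 0 then \<eta> $ r else 0)"
    by (rule sum.cong[OF refl]) (simp add: bern_def algebra_simps)
  also have "\<dots> = ee i 0" by (simp add: ee_def)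
  finally show ?thesis .
qed

lemma LB_all: "ee i m \<le> measure M (Ev i m)"
  using LB[of m i] exact0[of i] by (cases m) auto

end


context cookie
begin

lemma prod_sum1: "(\<Sum>l\<in>lsts n. \<Prod>k<n. Pm $ ((a # l) ! k) $ ((a # l) ! Suc k)) = 1"
proof (induction n arbitrary: a)
  case 0 thus ?case by (simp add: lsts_0)
next
  case (Suc n)
  have "(\<Sum>l\<in>lsts (Suc n). \<Prod>k<Suc n. Pm $ ((a # l) ! k) $ ((a # l) ! Suc k))
      = (\<Sum>b\<in>UNIV. \<Sum>l\<in>lsts n. \<Prod>k<Suc n. Pm $ ((a # b # l) ! k) $ ((a # b # l) ! Suc k))"
    by (rule lsts_Suc_sum)
  also have "\<dots> = (\<Sum>b\<in>UNIV. \<Sum>l\<in>lsts n. Pm $ a $ b * (\<Prod>k<n. Pm $ ((b # l) ! k) $ ((b # l) ! Suc k)))"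
    by (simp only: prod.lessThan_Suc_shift nth_Cons_0 nth_Cons_Suc)
  also have "\<dots> = (\<Sum>b\<in>UNIV. Pm $ a $ b * (\<Sum>l\<in>lsts n. \<Prod>k<n. Pm $ ((b # l) ! k) $ ((b # l) ! Suc k)))"
    by (simp only: sum_distrib_left)
  also have "\<dots> = 1" by (simp only: Suc.IH mult_1_right Pm_rows)
  finally show ?case .
qed

lemma ee_total: "(\<Sum>l\<in>lsts (Suc m). ee (\<lambda>k. l ! k) m) = 1"
proof -
  have "(\<Sum>l\<in>lsts (Suc m). ee (\<lambda>k. l ! k) m)
      = (\<Sum>a\<in>UNIV. \<Sum>l\<in>lsts m. \<eta> $ a * (\<Prod>k<m. Pm $ ((a # l) ! k) $ ((a # l) ! Suc k)))"
    by (simp only: lsts_Suc_sum ee_def nth_Cons_0)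
  also have "\<dots> = (\<Sum>a\<in>UNIV. \<eta> $ a)" by (simp only: sum_distrib_left[symmetric] prod_sum1 mult_1_right)
  also have "\<dots> = 1" by (rule eta_sum)
  finally show ?thesis .
qed

lemma markov_eq: "measure M (Ev i m) = ee i m"
proof -
  define L :: "'n list set" where "L = lsts (Suc m)"
  have fL: "finite L" by (simp add: L_def finite_lsts)
  define E where "E l = Ev (\<lambda>k. l ! k) m" for l :: "'n list"
  have disj: "disjoint_family_on E L"
    unfolding disjoint_family_on_def
  proof (intro ballI impI)
    fix l l' assume l: "l \<in> L" and l': "l' \<in> L" and ne: "l \<noteq> l'"
    have len: "length l = Suc m" "length l' = Suc m" using l l' by (auto simp: L_def lsts_def)
    then obtain k where k: "k < Suc m" "l ! k \<noteq> l' ! k" using ne nth_equalityI by metis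
    show "E l \<inter> E l' = {}"
    proof (rule ccontr)
      assume "E l \<inter> E l' \<noteq> {}"
      then obtain \<omega> where "\<omega> \<in> E l" "\<omega> \<in> E l'" by blast
      hence "I_type R \<xi> k \<omega> = l ! k" "I_type R \<xi> k \<omega> = l' ! k" using k(1) by (auto simp: E_def Ev_def)
      thus False using k(2) by simp
    qed
  qed
  have Es: "E ` L \<subseteq> sets M" using Ev_sets by (auto simp: E_def)
  have "(\<Sum>l\<in>L. measure M (E l)) = measure M (\<Union>l\<in>L. E l)"
    by (rule finite_measure_finite_Union[OF fL Es disj, symmetric])
  also have "\<dots> \<le> 1" by (rule prob_le_1)
  finally have s1: "(\<Sum>l\<in>L. measure M (E l)) \<le> 1" .
  have s2: "(\<Sum>l\<in>L. ee (\<lambda>k. l ! k) m) = 1" unfolding L_def by (rule ee_total)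
  have dn: "\<forall>l\<in>L. 0 \<le> measure M (E l) - ee (\<lambda>k. l ! k) m" using LB_all by (simp add: E_def)
  have "(\<Sum>l\<in>L. measure M (E l) - ee (\<lambda>k. l ! k) m) \<le> 0"
    using s1 s2 by (simp add: sum_subtractf)
  moreover have "0 \<le> (\<Sum>l\<in>L. measure M (E l) - ee (\<lambda>k. l ! k) m)" by (rule sum_nonneg) (use dn in auto)
  ultimately have "(\<Sum>l\<in>L. measure M (E l) - ee (\<lambda>k. l ! k) m) = 0" by simp
  hence z: "\<forall>l\<in>L. measure M (E l) - ee (\<lambda>k. l ! k) m = 0"
    using sum_nonneg_eq_0_iff[OF fL, of "\<lambda>l. measure M (E l) - ee (\<lambda>k. l ! k) m"] dn by blast
  define l0 where "l0 = map i [0..<Suc m]"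
  have l0L: "l0 \<in> L" by (simp add: l0_def L_def lsts_def)
  have nth0: "k \<le> m \<Longrightarrow> l0 ! k = i k" for k unfolding l0_def by (subst nth_map_upt) auto
  have "E l0 = Ev i m" unfolding E_def Ev_def using nth0 by auto
  moreover have "ee (\<lambda>k. l0 ! k) m = ee i m"
  proof -
    have "(\<Prod>k'<m. Pm $ (l0 ! k') $ (l0 ! Suc k')) = (\<Prod>k'<m. Pm $ i k' $ i (Suc k'))"
      by (rule prod.cong[OF refl]) (simp add: nth0)
    thus ?thesis unfolding ee_def using nth0[of 0] by simp
  qed
  ultimately show ?thesis using z l0L by (metis eq_iff_diff_eq_0)
qed

end


definition allT :: "('n \<times> bool) list \<Rightarrow> bool" where "allT h = (\<forall>y\<in>set h. snd y)"

lemma allT_Wd: "allT (Wd R \<xi> n \<omega>) \<longleftrightarrow> (\<forall>j\<in>{1..n}. \<xi> j \<omega>)"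
proof (induction n)
  case 0 thus ?case by (simp add: allT_def)
next
  case (Suc n)
  have "{1..Suc n} = insert (Suc n) {1..n}" by auto
  thus ?case using Suc by (auto simp: allT_def)
qed

context cookie
begin

definition zeta :: "nat \<Rightarrow> 'n \<Rightarrow> real" where
  "zeta t r = (\<Sum>h\<in>words t. if allT h then wt0 K p \<eta> r h else 0)"

lemma zeta_0: "zeta 0 r = \<eta> $ r" by (simp add: zeta_def words_0 wt0_Nil allT_def)

lemma zeta_nn: "0 \<le> zeta t r" unfolding zeta_def by (rule sum_nonneg) (simp add: wt0_nn)

lemma zeta_Suc: "zeta (Suc t) r' = (\<Sum>r\<in>UNIV. zeta t r * p $ r * K $ r $ r')"
proof -
  have pT: "(if allT ((r, True) # h) then wt0 K p \<eta> r' ((r, True) # h) else 0)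
      = (if allT h then wt0 K p \<eta> r h else 0) * p $ r * K $ r $ r'" for r h
    by (simp add: allT_def wt0_Cons bern_def)
  have pF: "(if allT ((r, False) # h) then wt0 K p \<eta> r' ((r, False) # h) else 0) = 0" for r h
    by (simp add: allT_def)
  have "zeta (Suc t) r' = (\<Sum>r\<in>UNIV. (\<Sum>h\<in>words t. (if allT h then wt0 K p \<eta> r h else 0) * p $ r * K $ r $ r') + 0)"
    by (simp only: zeta_def words_Suc_sum pT pF sum.neutral_const)
  also have "\<dots> = (\<Sum>r\<in>UNIV. zeta t r * p $ r * K $ r $ r')"
    by (simp add: zeta_def sum_distrib_right)
  finally show ?thesis .
qed

lemma zeta_sum:
  "(\<forall>r. summable (\<lambda>t. zeta t r)) \<and> (\<chi> r. \<Sum>t. zeta t r) = \<eta> v* Bi"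
proof -
  define x where "x t = (\<chi> r. zeta t r)" for t
  define u :: "nat \<Rightarrow> real^'n" where "u n = 0" for n
  have rec: "x (Suc n) = x n v* (diag_mat p ** K) + u n" for n
    by (simp add: x_def u_def vec_eq_iff zeta_Suc vm_comp diag_mult_comp mult.assoc)
  have xnn: "0 \<le> x n $ r" for n r by (simp add: x_def zeta_nn)
  have unn: "0 \<le> u n $ r" for n r by (simp add: u_def)
  have us: "summable (\<lambda>n. u n $ r)" for r by (simp add: u_def)
  note L = lsol[OF Kst pp' rec xnn unn us]
  have u0: "(\<chi> r. \<Sum>n. u n $ r) = 0" by (simp add: u_def vec_eq_iff)
  have x0: "x 0 = \<eta>" by (simp add: x_def zeta_0 vec_eq_iff)
  have "(\<chi> r. \<Sum>t. zeta t r) = (\<chi> r. \<Sum>n. x n $ r)" by (simp add: x_def)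
  also have "\<dots> = (x 0 + (\<chi> r. \<Sum>n. u n $ r)) v* matrix_inv (mat 1 - diag_mat p ** K)" by (rule L(2))
  also have "\<dots> = \<eta> v* Bi" by (simp only: u0 x0 add_0_right Bi_def)
  finally show ?thesis using L(1) by (simp add: x_def)
qed

definition At :: "nat \<Rightarrow> 'w set" where
  "At t = {\<omega>\<in>space M. allT (Wd R \<xi> (Suc t) \<omega>)}"

lemma At_sets: "At t \<in> sets M" unfolding At_def by (rule Wd_sets)

lemma meas_At: "measure M (At t) = (\<Sum>r\<in>UNIV. zeta t r * p $ r)"
proof -
  have pt: "(if allT ((r, True) # h) then wtr K p \<eta> ((r, True) # h) else 0)
      + (if allT ((r, False) # h) then wtr K p \<eta> ((r, False) # h) else 0)
      = (if allT h then wt0 K p \<eta> r h else 0) * p $ r" for r h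
    by (simp add: allT_def wtr_cons bern_def del: wtr.simps)
  have "measure M (At t) = (\<Sum>w\<in>words (Suc t). if allT w then wtr K p \<eta> w else 0)"
    unfolding At_def by (rule meas_Wd_pred)
  also have "\<dots> = (\<Sum>r\<in>UNIV. \<Sum>h\<in>words t. (if allT h then wt0 K p \<eta> r h else 0) * p $ r)"
    by (simp only: words_Suc_sum sum.distrib[symmetric] pt)
  also have "\<dots> = (\<Sum>r\<in>UNIV. zeta t r * p $ r)" by (simp add: zeta_def sum_distrib_right)
  finally show ?thesis .
qed

lemma At_sums: "(\<lambda>t. measure M (At t)) sums ((\<eta> v* Bi) \<bullet> p)"
proof -
  have zs: "summable (\<lambda>t. zeta t r)" for r using zeta_sum by simp
  have s: "summable (\<lambda>t. \<Sum>r\<in>UNIV. zeta t r * p $ r)"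
    by (rule summable_sum) (auto intro!: summable_mult2 zs)
  have "(\<Sum>t. \<Sum>r\<in>UNIV. zeta t r * p $ r) = (\<Sum>r\<in>UNIV. \<Sum>t. zeta t r * p $ r)"
    by (rule suminf_sum) (auto intro!: summable_mult2 zs)
  also have "\<dots> = (\<Sum>r\<in>UNIV. (\<Sum>t. zeta t r) * p $ r)"
    by (rule sum.cong[OF refl], rule suminf_mult2[symmetric], rule zs)
  also have "\<dots> = (\<chi> r. \<Sum>t. zeta t r) \<bullet> p" by (simp add: inner_vec_def)
  also have "\<dots> = (\<eta> v* Bi) \<bullet> p" using zeta_sum by simp
  finally show ?thesis using s by (simp add: meas_At sums_iff)
qed

definition Nul :: "'w set" where "Nul = {\<omega>\<in>space M. \<forall>j. allT (Wd R \<xi> j \<omega>)}"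

lemma Nul_sets: "Nul \<in> sets M"
  unfolding Nul_def by (rule sets.sets_Collect_countable_All) (rule Wd_sets)

lemma Nul_null: "Nul \<in> null_sets M"
proof -
  have sub: "Nul \<subseteq> At t" for t unfolding Nul_def At_def by blast
  have le: "measure M Nul \<le> measure M (At t)" for t by (rule finite_measure_mono[OF sub At_sets])
  have "(\<lambda>t. measure M (At t)) \<longlonglongrightarrow> 0"
    using At_sums by (intro summable_LIMSEQ_zero) (simp add: sums_iff)
  hence "measure M Nul \<le> 0" by (rule LIMSEQ_le_const) (use le in auto)
  hence "measure M Nul = 0" by (simp add: measure_nonneg antisym)
  thus ?thesis using Nul_sets by (simp add: null_sets_def emeasure_eq_measure)
qed

lemma S0: "S_succ \<xi> 0 \<omega> = 0"
  unfolding S_succ_def by (rule Least_eq_0) simp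

lemma G_eq: "G_succ \<xi> 1 = S_succ \<xi> 1"
  by (simp add: fun_eq_iff G_succ_def S0)

lemma G_key:
  assumes "\<omega> \<in> space M" "\<omega> \<notin> Nul"
  shows "t < G_succ \<xi> 1 \<omega> \<longleftrightarrow> (\<forall>j\<in>{1..Suc t}. \<xi> j \<omega>)"
proof -
  obtain j where "\<not> allT (Wd R \<xi> j \<omega>)" using assms by (auto simp: Nul_def)
  then obtain j where j: "j \<ge> 1" "\<not> \<xi> j \<omega>" by (auto simp: allT_Wd)
  have "1 \<le> Fc \<xi> \<omega> j"
  proof -
    have "card {j} \<le> Fc \<xi> \<omega> j" unfolding Fc_def by (rule card_mono) (use j in auto)
    thus ?thesis by simp
  qed
  define t0 where "t0 = (LEAST t. 1 \<le> Fc \<xi> \<omega> t)"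
  note S = S_succ_eq[OF order_refl \<open>1 \<le> Fc \<xi> \<omega> j\<close>, folded t0_def]
  have G: "G_succ \<xi> 1 \<omega> = t0 - 1" unfolding G_eq using S(1) by simp
  show ?thesis
  proof
    assume lt: "t < G_succ \<xi> 1 \<omega>"
    show "\<forall>j\<in>{1..Suc t}. \<xi> j \<omega>"
    proof (rule ballI, rule ccontr)
      fix l assume l: "l \<in> {1..Suc t}" "\<not> \<xi> l \<omega>"
      have "card {l} \<le> Fc \<xi> \<omega> l" unfolding Fc_def by (rule card_mono) (use l in auto)
      hence "t0 \<le> l" unfolding t0_def by (intro Least_le) simp
      thus False using l lt G by auto
    qed
  next
    assume all: "\<forall>j\<in>{1..Suc t}. \<xi> j \<omega>"
    show "t < G_succ \<xi> 1 \<omega>"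
    proof (rule ccontr)
      assume "\<not> t < G_succ \<xi> 1 \<omega>"
      hence "t0 \<in> {1..Suc t}" using G S(4) by auto
      thus False using all S(3) by blast
    qed
  qed
qed

lemma G_meas: "G_succ \<xi> 1 \<in> measurable M (count_space UNIV)"
  unfolding G_eq by (rule S_meas)

lemma G_int: "(\<integral>\<^sup>+ \<omega>. ennreal (real (G_succ \<xi> 1 \<omega>)) \<partial>M) = ennreal ((\<eta> v* Bi) \<bullet> p)"
proof -
  have "(\<integral>\<^sup>+ \<omega>. ennreal (real (G_succ \<xi> 1 \<omega>)) \<partial>M) = (\<integral>\<^sup>+ \<omega>. of_nat (G_succ \<xi> 1 \<omega>) \<partial>M)"
    by (simp add: ennreal_of_nat_eq_real_of_nat)
  also have "\<dots> = (\<Sum>t. emeasure M {\<omega>\<in>space M. t < G_succ \<xi> 1 \<omega>})"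
    by (rule nn_integral_nat_function[OF G_meas])
  also have "\<dots> = (\<Sum>t. emeasure M (At t))"
  proof (rule suminf_cong)
    fix t
    have sG: "{\<omega>\<in>space M. t < G_succ \<xi> 1 \<omega>} \<in> sets M"
    proof -
      have "G_succ \<xi> 1 -` {s. t < s} \<inter> space M \<in> sets M"
        by (rule measurable_sets[OF G_meas]) (simp only: sets_count_space Pow_UNIV, rule UNIV_I)
      moreover have "G_succ \<xi> 1 -` {s. t < s} \<inter> space M = {\<omega>\<in>space M. t < G_succ \<xi> 1 \<omega>}" by blast
      ultimately show ?thesis by metis
    qed
    have "AE \<omega> in M. \<omega> \<in> {\<omega>\<in>space M. t < G_succ \<xi> 1 \<omega>} \<longleftrightarrow> \<omega> \<in> At t"
    proof (rule AE_I'[OF Nul_null])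
      show "{\<omega>\<in>space M. \<not> (\<omega> \<in> {\<omega>\<in>space M. t < G_succ \<xi> 1 \<omega>} \<longleftrightarrow> \<omega> \<in> At t)} \<subseteq> Nul"
      proof (rule subsetI, rule ccontr)
        fix \<omega> assume a: "\<omega> \<in> {\<omega>\<in>space M. \<not> (\<omega> \<in> {\<omega>\<in>space M. t < G_succ \<xi> 1 \<omega>} \<longleftrightarrow> \<omega> \<in> At t)}"
          and n: "\<omega> \<notin> Nul"
        hence sp: "\<omega> \<in> space M" by simp
        have "\<omega> \<in> At t \<longleftrightarrow> (\<forall>j\<in>{1..Suc t}. \<xi> j \<omega>)"
          using sp unfolding At_def allT_Wd by blast
        moreover have "t < G_succ \<xi> 1 \<omega> \<longleftrightarrow> (\<forall>j\<in>{1..Suc t}. \<xi> j \<omega>)" by (rule G_key[OF sp n])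
        ultimately show False using a sp by blast
      qed
    qed
    thus "emeasure M {\<omega>\<in>space M. t < G_succ \<xi> 1 \<omega>} = emeasure M (At t)"
      by (rule emeasure_eq_AE[OF _ sG At_sets])
  qed
  also have "\<dots> = (\<Sum>t. ennreal (measure M (At t)))" by (simp add: emeasure_eq_measure)
  also have "\<dots> = ennreal (\<Sum>t. measure M (At t))"
    by (rule suminf_ennreal2) (use At_sums in \<open>auto simp: sums_iff\<close>)
  also have "\<dots> = ennreal ((\<eta> v* Bi) \<bullet> p)" using At_sums by (simp add: sums_iff)
  finally show ?thesis .
qed

end


theorem lemma3p2:
  fixes K :: "real^'n^'n" and p \<mu> :: "real^'n"
  assumes "stochastic_matrix K"
    and "unique_closed_irreducible K"
    and "\<And>i. 0 < p $ i \<and> p $ i < 1"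
    and "stationary_dist K \<mu>"
  defines "pbar \<equiv> \<mu> \<bullet> p"
  defines "lam \<equiv> pbar / (1 - pbar)"
  defines "Pmat \<equiv> matrix_inv (mat 1 - diag_mat p ** K) ** (diag_mat (1 - p) ** K)"
  defines "\<pi> \<equiv> (1 / (1 - pbar)) *s (\<mu> v* (mat 1 - diag_mat p ** K))"
  defines "g \<equiv> matrix_inv (mat 1 - diag_mat p ** K) *v p"
  shows "invertible (mat 1 - diag_mat p ** K)
    \<and> (\<forall>(M :: 'w measure) R \<xi> \<eta>. cookie_process M R \<xi> K p \<eta> \<longrightarrow>
         (\<forall>m (i :: nat \<Rightarrow> 'n).
            measure M {\<omega>\<in>space M. \<forall>k\<le>m. I_type R \<xi> k \<omega> = i k}
            = \<eta> $ i 0 * (\<Prod>k<m. Pmat $ i k $ i (Suc k))))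
    \<and> stationary_dist Pmat \<pi>
    \<and> (\<forall>\<nu>. stationary_dist Pmat \<nu> \<longrightarrow> \<nu> = \<pi>)
    \<and> \<pi> = (1 + lam) *s (\<mu> v* (mat 1 - diag_mat p ** K))
    \<and> (\<forall>(M :: 'w measure) R \<xi> i. cookie_process M R \<xi> K p (axis i 1) \<longrightarrow>
         (\<integral>\<^sup>+ \<omega>. ennreal (real (G_succ \<xi> 1 \<omega>)) \<partial>M) = ennreal (g $ i))
    \<and> \<pi> \<bullet> g = lam"
proof -
  note L = LA_main[OF assms(1-4)]
  have markov: "\<forall>(M :: 'w measure) R \<xi> \<eta>. cookie_process M R \<xi> K p \<eta> \<longrightarrow>
         (\<forall>m (i :: nat \<Rightarrow> 'n).
            measure M {\<omega>\<in>space M. \<forall>k\<le>m. I_type R \<xi> k \<omega> = i k}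
            = \<eta> $ i 0 * (\<Prod>k<m. Pmat $ i k $ i (Suc k)))"
  proof (intro allI impI)
    fix M :: "'w measure" and R \<xi> \<eta> m and i :: "nat \<Rightarrow> 'n"
    assume cp: "cookie_process M R \<xi> K p \<eta>"
    interpret C: cookie M R \<xi> K p \<eta> by unfold_locales (rule cp, rule assms(1), rule assms(3))
    show "measure M {\<omega>\<in>space M. \<forall>k\<le>m. I_type R \<xi> k \<omega> = i k} = \<eta> $ i 0 * (\<Prod>k<m. Pmat $ i k $ i (Suc k))"
      using C.markov_eq[of i m] unfolding C.Ev_def C.ee_def C.Pm_def C.Bi_def C.Dm_def Pmat_def .
  qed
  have gpart: "\<forall>(M :: 'w measure) R \<xi> i. cookie_process M R \<xi> K p (axis i 1) \<longrightarrow>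
         (\<integral>\<^sup>+ \<omega>. ennreal (real (G_succ \<xi> 1 \<omega>)) \<partial>M) = ennreal (g $ i)"
  proof (intro allI impI)
    fix M :: "'w measure" and R \<xi> i
    assume cp: "cookie_process M R \<xi> K p (axis i 1)"
    interpret C: cookie M R \<xi> K p "axis i 1" by unfold_locales (rule cp, rule assms(1), rule assms(3))
    have "(axis i 1 v* C.Bi) \<bullet> p = g $ i"
      by (simp add: g_def C.Bi_def inner_vec_def axis_vm mv_comp)
    thus "(\<integral>\<^sup>+ \<omega>. ennreal (real (G_succ \<xi> 1 \<omega>)) \<partial>M) = ennreal (g $ i)"
      using C.G_int by simp
  qed
  show ?thesis
    using L markov gpart unfolding pbar_def lam_def Pmat_def \<pi>_def g_def by blast
qed


end
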